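(* In the setting of the context, suppose that $\mathbf 1=(1,\dots,1)$ is a (uniformly) globally asymptotically stable equilibrium of $\dot o_k(t)=\dfrac{\pi_k(0,\mu^*,o(t))}{\gamma_k(\mu^* )}-o_k(t)$, $k\in[K]$. Then $(0,\mu^*,\mathbf 1)$ is a (uniformly) globally asymptotically stable equilibrium of the time-independent system $\dot{\bar\theta}(t)=\bar g(\bar\theta(t))$.
   Context: $K\ge2$, $M\ge1$, $\varepsilon>0$; $\mathcal{P}^\varepsilon(K)$ is the set of probability vectors on $[K]$ with entries $\ge\varepsilon$; $O^\varepsilon=\{o\in\mathbb{R}^K_{\ge0}:\sum_ko_k\le\varepsilon^{-1}\}$; $\Theta=\mathbb{R}^K\times\mathbb{R}^{KM}\times O^\varepsilon$; $\pi:\Theta\to\mathcal P^\varepsilon(K)$ and $\gamma:\mathbb{R}^{KM}\to\mathcal P^\varepsilon(K)$ are continuously differentiable; $\mu^*\in\mathbb{R}^{KM}$ is fixed. The system $\dot{\bar\theta}=\bar g(\bar\theta)$, $\bar\theta=(\bar F,\mu,o)$, with $\bar F$ in the hyperplane $\{\sum_k\bar F_k=0\}$, is $\dot{\bar F}_k=\frac1K\sum_j\frac{e^{\bar F_j}}{\sum_\ell\pi_\ell(\bar\theta)e^{\bar F_\ell}}-\frac{e^{\bar F_k}}{\sum_\ell\pi_\ell(\bar\theta)e^{\bar F_\ell}}$, $\dot\mu_{km}=\frac{e^{\bar F_k}}{\sum_\ell\pi_\ell(\bar\theta)e^{\bar F_\ell}}(\mu^*_{km}-\mu_{km})$, $\dot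 o_k=\frac{\pi_k(\bar\theta)}{\gamma_k(\mu)}\frac{e^{\bar F_k}}{\sum_\ell\pi_\ell(\bar\theta)e^{\bar F_\ell}}-o_k$. Global asymptotic stability of $z^*$ for $\dot z=h(z,t)$: (1) for each $\eta>0$ there is $\delta>0$ independent of $t_0$ with $|z_0-z^*|<\delta\Rightarrow|z(t;z_0,t_0)-z^*|<\eta$ for all $t\ge t_0\ge0$; (2) for all $\eta,\rho>0$ there is $T(\rho,\eta)<\infty$ independent of $t_0$ with $|z(t;z_0,t_0)-z^*|<\eta$ for $t\ge t_0+T$ whenever $|z_0-z^*|<\rho$. *)

theory Defs
  imports "HOL-Analysis.Analysis"
begin

text \<open>Index set [K] is the finite type 'k (K = CARD('k)), index set [M] is 'm.
  R^K = real^'k, R^{KM} = real^'m^'k (entry mu_{km} = mu$k$m).\<close>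

definition prob_eps :: "real \<Rightarrow> (real^'k) set" where
  "prob_eps \<epsilon> = {p. (\<Sum>k\<in>UNIV. p$k) = 1 \<and> (\<forall>k. p$k \<ge> \<epsilon>)}"

definition O_eps :: "real \<Rightarrow> (real^'k) set" where
  "O_eps \<epsilon> = {w. (\<forall>k. w$k \<ge> 0) \<and> (\<Sum>k\<in>UNIV. w$k) \<le> 1 / \<epsilon>}"

definition Theta :: "real \<Rightarrow> ((real^'k) \<times> (real^'m^'k) \<times> (real^'k)) set" where
  "Theta \<epsilon> = UNIV \<times> UNIV \<times> O_eps \<epsilon>"

definition Theta_bar :: "real \<Rightarrow> ((real^'k) \<times> (real^'m^'k) \<times> (real^'k)) set" where
  "Theta_bar \<epsilon> = {(F, mu, w). (\<Sum>k\<in>UNIV. F$k) = 0 \<and> w \<in> O_eps \<epsilon>}"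

definition C1_on :: "'a::real_normed_vector set \<Rightarrow> ('a \<Rightarrow> 'b::real_normed_vector) \<Rightarrow> bool" where
  "C1_on S f \<longleftrightarrow> (\<exists>f'. (\<forall>x\<in>S. (f has_derivative blinfun_apply (f' x)) (at x within S))
                      \<and> continuous_on S f')"

definition gbar ::
  "((real^'k) \<times> (real^'m^'k) \<times> (real^'k) \<Rightarrow> real^'k) \<Rightarrow> (real^'m^'k \<Rightarrow> real^'k) \<Rightarrow> real^'m^'k
   \<Rightarrow> (real^'k) \<times> (real^'m^'k) \<times> (real^'k) \<Rightarrow> (real^'k) \<times> (real^'m^'k) \<times> (real^'k)" where
  "gbar \<pi> \<gamma> mus \<theta> = (case \<theta> of (F, mu, w) \<Rightarrow>
     (let Z = (\<Sum>l\<in>UNIV. \<pi> \<theta> $ l * exp (F$l)) in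
      ((\<chi> k. (1 / real CARD('k)) * (\<Sum>j\<in>UNIV. exp (F$j) / Z) - exp (F$k) / Z),
       (\<chi> k m. exp (F$k) / Z * (mus$k$m - mu$k$m)),
       (\<chi> k. \<pi> \<theta> $ k / \<gamma> mu $ k * (exp (F$k) / Z) - w$k))))"

definition is_solution :: "'a::real_normed_vector set \<Rightarrow> ('a \<Rightarrow> real \<Rightarrow> 'a) \<Rightarrow> real \<Rightarrow> (real \<Rightarrow> 'a) \<Rightarrow> bool" where
  "is_solution S h t0 z \<longleftrightarrow> (\<forall>t\<ge>t0. z t \<in> S \<and> (z has_vector_derivative h (z t) t) (at t within {t0..}))"

definition GAS :: "'a::real_normed_vector set \<Rightarrow> ('a \<Rightarrow> real \<Rightarrow> 'a) \<Rightarrow> 'a \<Rightarrow> bool" where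
  "GAS S h zs \<longleftrightarrow>
     zs \<in> S \<and> (\<forall>t\<ge>0. h zs t = 0) \<and>
     (\<forall>\<eta>>0. \<exists>\<delta>>0. \<forall>t0\<ge>0. \<forall>z. is_solution S h t0 z \<and> norm (z t0 - zs) < \<delta>
          \<longrightarrow> (\<forall>t\<ge>t0. norm (z t - zs) < \<eta>)) \<and>
     (\<forall>\<eta>>0. \<forall>\<rho>>0. \<exists>T. \<forall>t0\<ge>0. \<forall>z. is_solution S h t0 z \<and> norm (z t0 - zs) < \<rho>
          \<longrightarrow> (\<forall>t\<ge>t0 + T. norm (z t - zs) < \<eta>))"

end

theory Submission
  imports Defs
begin

lemma nonincr_deriv:
  fixes g :: "real \<Rightarrow> real"
  assumes der: "\<And>t. t \<ge> t0 \<Longrightarrow> (g has_real_derivative g' t) (at t within {t0..})"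
    and neg: "\<And>t. t \<ge> t0 \<Longrightarrow> g' t \<le> 0" and tt: "t0 \<le> t"
  shows "g t \<le> g t0"
proof -
  have "\<exists>x\<in>{t0..t}. g t - g t0 = (\<lambda>h. g' x * h) (t - t0)"
  proof (rule mvt_very_simple[OF tt])
    fix x assume "t0 \<le> x" "x \<le> t"
    then have "(g has_real_derivative g' x) (at x within {t0..t})"
      using der[of x] by (rule_tac has_field_derivative_subset) auto
    then show "(g has_derivative (\<lambda>h. g' x * h)) (at x within {t0..t})"
      by (simp add: has_field_derivative_def)
  qed
  then obtain x where "x \<in> {t0..t}" "g t - g t0 = g' x * (t - t0)" by auto
  moreover have "g' x * (t - t0) \<le> 0" using neg[of x] tt \<open>x \<in> {t0..t}\<close>
    by (simp add: mult_nonpos_nonneg)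
  ultimately show ?thesis by simp
qed

lemma exp_decay:
  fixes \<phi> :: "real \<Rightarrow> real"
  assumes der: "\<And>t. t \<ge> t0 \<Longrightarrow> (\<phi> has_real_derivative \<phi>' t) (at t within {t0..})"
    and ineq: "\<And>t. t \<ge> t0 \<Longrightarrow> \<phi>' t \<le> - c * \<phi> t" and tt: "t0 \<le> t"
  shows "\<phi> t \<le> exp (- c * (t - t0)) * \<phi> t0"
proof -
  let ?\<psi> = "\<lambda>t. exp (c * (t - t0)) * \<phi> t"
  have "?\<psi> t \<le> ?\<psi> t0"
  proof (rule nonincr_deriv[OF _ _ tt])
    fix s assume s: "t0 \<le> s"
    show "(?\<psi> has_real_derivative (exp (c * (s - t0)) * c * \<phi> s + exp (c * (s - t0)) * \<phi>' s)) (at s within {t0..})"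
      by (auto intro!: derivative_eq_intros der s)
    have "exp (c * (s - t0)) * (c * \<phi> s + \<phi>' s) \<le> 0"
      using ineq[OF s] by (intro mult_nonneg_nonpos) auto
    then show "exp (c * (s - t0)) * c * \<phi> s + exp (c * (s - t0)) * \<phi>' s \<le> 0"
      by (simp add: algebra_simps)
  qed
  then have 1: "exp (- c * (t - t0)) * ?\<psi> t \<le> exp (- c * (t - t0)) * \<phi> t0"
    by (intro mult_left_mono) auto
  have e: "exp (- c * (t - t0)) * exp (c * (t - t0)) = 1" by (simp add: exp_minus)
  have 2: "exp (- c * (t - t0)) * ?\<psi> t = \<phi> t"
    using e by (metis mult.assoc mult_1)
  from 1 2 show ?thesis by linarith
qed

lemma cont_int_clamp:
  fixes g :: "real \<Rightarrow> 'a::banach"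
  assumes "continuous_on UNIV g"
  shows "continuous_on UNIV (\<lambda>t. integral {0..max 0 t} g)"
proof -
  have "isCont (\<lambda>t. integral {0..max 0 t} g) x" for x
  proof -
    define b where "b = \<bar>x\<bar> + 1"
    have c1: "continuous_on {0..b} (\<lambda>t. integral {0..t} g)"
      by (rule indefinite_integral_continuous_1, rule integrable_continuous_real,
          rule continuous_on_subset[OF assms]) auto
    have "continuous_on {..<b} ((\<lambda>t. integral {0..t} g) \<circ> (\<lambda>t. max 0 t))"
      apply (rule continuous_on_compose)
       apply (intro continuous_intros)
      apply (rule continuous_on_subset[OF c1]) using b_def by auto
    then have cc: "continuous_on {..<b} (\<lambda>t. integral {0..max 0 t} g)" by (simp add: o_def)
    have xb: "x \<in> {..<b}" unfolding b_def by auto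
    show ?thesis
      using continuous_on_eq_continuous_at[OF open_lessThan, of b, THEN iffD1, OF cc] xb by blast
  qed
  then show ?thesis by (simp add: continuous_at_imp_continuous_on)
qed

lemma exp_has_integral:
  fixes c :: real
  assumes "c > 0" "0 \<le> \<tau>"
  shows "((\<lambda>r. exp (c * r)) has_integral (exp (c * \<tau>) - 1) / c) {0..\<tau>}"
proof -
  have "((\<lambda>r. exp (c * r) / c) has_vector_derivative exp (c * r)) (at r within {0..\<tau>})" for r
    using assms(1) by (auto intro!: derivative_eq_intros simp: has_real_derivative_iff_has_vector_derivative[symmetric])
  then have "((\<lambda>r. exp (c * r)) has_integral (exp (c * \<tau>) / c - exp (c * 0) / c)) {0..\<tau>}"
    by (intro fundamental_theorem_of_calculus) (use assms in auto)
  then show ?thesis by (simp add: diff_divide_distrib)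
qed

lemma lipschitz_cont:
  fixes A :: "'a::metric_space \<Rightarrow> 'b::metric_space"
  assumes Lip: "\<And>x y. dist (A x) (A y) \<le> La * dist x y" and La: "0 \<le> La"
  shows "continuous_on UNIV A"
proof -
  have "lipschitz_on La UNIV A" using assms by (auto simp: lipschitz_on_def)
  then show ?thesis by (rule lipschitz_on_continuous_on)
qed

lemma ode_exists:
  fixes A :: "real^'k \<Rightarrow> real^'k" and x0 :: "real^'k"
  assumes Lip: "\<And>x y. norm (A x - A y) \<le> La * norm (x - y)" and La: "0 \<le> La"
    and bnd: "\<And>x. norm (A x) \<le> Ba"
  shows "\<exists>u. continuous_on UNIV u \<and>
     (\<forall>t\<ge>0. u t = exp (-t) *\<^sub>R (x0 + integral {0..t} (\<lambda>r. exp r *\<^sub>R A (u r))))"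
proof -
  have Ba: "0 \<le> Ba" using bnd[of 0] norm_ge_zero order_trans by blast
  have contA: "continuous_on UNIV A"
    by (rule lipschitz_cont[OF _ La]) (simp add: dist_norm Lip)
  define g where "g y r = exp r *\<^sub>R A (exp (La*r) *\<^sub>R y r)" for y :: "real \<Rightarrow> real^'k" and r
  define \<psi> where "\<psi> y t = exp (-(La+1) * max 0 t) *\<^sub>R (x0 + integral {0..max 0 t} (g y))"
    for y :: "real \<Rightarrow> real^'k" and t
  have gcont: "continuous_on UNIV (g (apply_bcontfun y))" for y
    unfolding g_def
    by (intro continuous_intros continuous_on_compose2[OF contA]) auto
  have gint: "g (apply_bcontfun y) integrable_on {0..\<tau>}" for y and \<tau> :: real
    by (rule integrable_continuous_real, rule continuous_on_subset[OF gcont]) auto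
  have ebnd: "integral {0..\<tau>} (\<lambda>r. exp ((La+1) * r)) = (exp ((La+1) * \<tau>) - 1) / (La+1)"
    "(\<lambda>r. exp ((La+1) * r)) integrable_on {0..\<tau>}" if "0 \<le> \<tau>" for \<tau> :: real
    using exp_has_integral[of "La+1" \<tau>] La that by auto
  have ebnd1: "integral {0..\<tau>} (\<lambda>r. exp r) = exp \<tau> - 1"
    "(\<lambda>r. exp r) integrable_on {0..\<tau>}" if "0 \<le> \<tau>" for \<tau> :: real
    using exp_has_integral[of 1 \<tau>] that by auto
  have \<psi>in: "\<psi> (apply_bcontfun y) \<in> bcontfun" for y
  proof (rule bcontfun_normI)
    show "continuous_on UNIV (\<psi> (apply_bcontfun y))"
      unfolding \<psi>_def
      by (intro continuous_intros cont_int_clamp gcont)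
    fix t :: real
    define \<tau> where "\<tau> = max 0 t"
    have \<tau>: "0 \<le> \<tau>" by (simp add: \<tau>_def)
    have "norm (integral {0..\<tau>} (g y)) \<le> integral {0..\<tau>} (\<lambda>r. exp r * Ba)"
      by (rule integral_norm_bound_integral[OF gint])
         (auto simp: g_def bnd mult_left_mono integrable_on_mult_left ebnd1[OF \<tau>])
    also have "\<dots> = (exp \<tau> - 1) * Ba" using ebnd1[OF \<tau>] by simp
    finally have i1: "norm (integral {0..\<tau>} (g y)) \<le> (exp \<tau> - 1) * Ba" .
    have "norm (\<psi> y t) = exp (-(La+1) * \<tau>) * norm (x0 + integral {0..\<tau>} (g y))"
      by (simp add: \<psi>_def \<tau>_def)
    also have "\<dots> \<le> exp (-(La+1) * \<tau>) * (norm x0 + (exp \<tau> - 1) * Ba)"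
      by (intro mult_left_mono) (use i1 norm_triangle_ineq[of x0 "integral {0..\<tau>} (g y)"] in auto)
    also have "\<dots> \<le> norm x0 + Ba"
    proof -
      have e1: "exp (-(La+1) * \<tau>) \<le> 1" using La \<tau> by (simp add: mult_nonpos_nonneg)
      have e2: "exp (-(La+1) * \<tau>) * exp \<tau> \<le> 1"
        using La \<tau> by (simp add: exp_add[symmetric] algebra_simps mult_nonneg_nonneg)
      have "exp (-(La+1) * \<tau>) * (norm x0 + (exp \<tau> - 1) * Ba)
          \<le> exp (-(La+1) * \<tau>) * norm x0 + exp (-(La+1) * \<tau>) * exp \<tau> * Ba"
        using Ba by (simp add: algebra_simps)
      also have "\<dots> \<le> norm x0 + Ba"
        using e1 e2 Ba by (intro add_mono) (auto intro: mult_left_le_one_le mult_left_le_one_le[of _ 1, simplified] mult_le_one simp: mult_right_le_one_le)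
      finally show ?thesis .
    qed
    finally show "norm (\<psi> y t) \<le> norm x0 + Ba" .
  qed
  define \<Psi> where "\<Psi> y = Bcontfun (\<psi> (apply_bcontfun y))" for y :: "real \<Rightarrow>\<^sub>C (real^'k)"
  have \<Psi>app: "apply_bcontfun (\<Psi> y) = \<psi> (apply_bcontfun y)" for y
    by (simp add: \<Psi>_def Bcontfun_inverse[OF \<psi>in])
  have contr: "dist (\<Psi> y1) (\<Psi> y2) \<le> (La/(La+1)) * dist y1 y2" for y1 y2
  proof (rule dist_bound)
    fix t :: real
    define \<tau> where "\<tau> = max 0 t"
    have \<tau>: "0 \<le> \<tau>" by (simp add: \<tau>_def)
    let ?D = "dist y1 y2"
    have D: "0 \<le> ?D" by simp
    have pt: "norm (g y1 r - g y2 r) \<le> La * ?D * exp ((La+1) * r)" for r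
    proof -
      have a: "norm (exp (La*r) *\<^sub>R y1 r - exp (La*r) *\<^sub>R y2 r) \<le> exp (La*r) * ?D"
        using dist_bounded[of y1 r y2] by (simp add: dist_norm scaleR_diff_right[symmetric])
      have "norm (g y1 r - g y2 r) = exp r * norm (A (exp (La*r) *\<^sub>R y1 r) - A (exp (La*r) *\<^sub>R y2 r))"
        by (simp add: g_def scaleR_diff_right[symmetric])
      also have "\<dots> \<le> exp r * (La * norm (exp (La*r) *\<^sub>R y1 r - exp (La*r) *\<^sub>R y2 r))"
        by (intro mult_left_mono Lip) auto
      also have "\<dots> \<le> exp r * (La * (exp (La*r) * ?D))"
        using a La by (intro mult_left_mono) auto
      also have "\<dots> = La * ?D * exp ((La+1) * r)"
        by (simp add: exp_add[symmetric] algebra_simps)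
      finally show ?thesis .
    qed
    have "dist (\<psi> y1 t) (\<psi> y2 t) = exp (-(La+1)*\<tau>) * norm (integral {0..\<tau>} (\<lambda>r. g y1 r - g y2 r))"
      by (simp add: \<psi>_def \<tau>_def dist_norm integral_diff[OF gint gint] scaleR_diff_right[symmetric])
    also have "\<dots> \<le> exp (-(La+1)*\<tau>) * integral {0..\<tau>} (\<lambda>r. La * ?D * exp ((La+1) * r))"
      by (intro mult_left_mono integral_norm_bound_integral integrable_diff gint pt
            integrable_on_mult_right ebnd[OF \<tau>]) auto
    also have "\<dots> = exp (-(La+1)*\<tau>) * (La * ?D * ((exp ((La+1) * \<tau>) - 1) / (La+1)))"
      using ebnd[OF \<tau>] by simp
    also have "\<dots> \<le> (La/(La+1)) * ?D"
    proof -
      have e: "exp (-(La+1)*\<tau>) * exp ((La+1) * \<tau>) = 1" by (simp add: exp_add[symmetric] algebra_simps)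
      have e1: "0 < exp (-(La+1)*\<tau>)" by simp
      have gen0: "\<And>E F c L :: real. L \<noteq> 0 \<Longrightarrow> E * (c * ((F - 1) / L)) = (c / L) * (E * F) - (c / L) * E"
        by (simp add: field_simps)
      have gen: "\<And>E F c. E * (c * ((F - 1) / (La+1))) = (c / (La+1)) * (E * F) - (c / (La+1)) * E"
        using La by (intro gen0) auto
      have "exp (-(La+1)*\<tau>) * (La * ?D * ((exp ((La+1) * \<tau>) - 1) / (La+1)))
         = (La * ?D / (La+1)) * (exp (-(La+1)*\<tau>) * exp ((La+1) * \<tau>)) - (La * ?D / (La+1)) * exp (-(La+1)*\<tau>)"
        by (rule gen)
      also have "\<dots> \<le> (La * ?D / (La+1)) * 1"
        unfolding e using La D e1 by (simp add: mult_nonneg_nonneg)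
      finally show ?thesis by simp
    qed
    finally show "dist (\<Psi> y1 t) (\<Psi> y2 t) \<le> (La/(La+1)) * ?D" by (simp add: \<Psi>app)
  qed
  have c1: "La/(La+1) < 1" using La by simp
  obtain y where y: "\<Psi> y = y"
    using banach_fix_type[of "La/(La+1)" \<Psi>] contr La c1 by auto
  define u where "u t = exp (La*t) *\<^sub>R apply_bcontfun y t" for t
  show ?thesis
  proof (intro exI conjI allI impI)
    show "continuous_on UNIV u" unfolding u_def by (intro continuous_intros) auto
    fix t :: real assume t: "0 \<le> t"
    have yt: "apply_bcontfun y t = \<psi> y t" using \<Psi>app[of y] y by metis
    have gy: "g (apply_bcontfun y) = (\<lambda>r. exp r *\<^sub>R A (u r))" by (simp add: g_def u_def fun_eq_iff)
    have "u t = exp (La*t) *\<^sub>R (exp (-(La+1) * t) *\<^sub>R (x0 + integral {0..t} (\<lambda>r. exp r *\<^sub>R A (u r))))"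
      unfolding u_def yt \<psi>_def gy using t by simp
    also have "\<dots> = exp (-t) *\<^sub>R (x0 + integral {0..t} (\<lambda>r. exp r *\<^sub>R A (u r)))"
      by (simp add: exp_add[symmetric] algebra_simps)
    finally show "u t = exp (-t) *\<^sub>R (x0 + integral {0..t} (\<lambda>r. exp r *\<^sub>R A (u r)))" .
  qed
qed

lemma ode_deriv:
  fixes A :: "real^'k \<Rightarrow> real^'k"
  fixes u :: "real \<Rightarrow> real^'k"
  assumes contu: "continuous_on UNIV u" and contA: "continuous_on UNIV A"
   and eq: "\<forall>t\<ge>0. u t = exp (-t) *\<^sub>R (x0 + integral {0..t} (\<lambda>r. exp r *\<^sub>R A (u r)))"
   and t: "0 \<le> t"
  shows "(u has_vector_derivative (A (u t) - u t)) (at t within {0..})"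
proof -
  let ?G = "\<lambda>r. exp r *\<^sub>R A (u r)"
  have Gc: "continuous_on UNIV ?G"
    by (intro continuous_intros continuous_on_compose2[OF contA contu]) auto
  have D1: "((\<lambda>s. integral {0..s} ?G) has_vector_derivative ?G t) (at t within {0..t+1})"
    by (rule integral_has_vector_derivative, rule continuous_on_subset[OF Gc]) (use t in auto)
  have eqat: "at t within {0..t+1} = at t within {0..}"
    by (rule at_within_nhd[of _ "{..<t+1}"]) auto
  have I: "((\<lambda>s. integral {0..s} ?G) has_vector_derivative ?G t) (at t within {0..})"
    using D1 unfolding eqat .
  have "((\<lambda>s. exp (-s) *\<^sub>R (x0 + integral {0..s} ?G)) has_vector_derivative
        (exp (-t) *\<^sub>R ?G t + (- exp (-t)) *\<^sub>R (x0 + integral {0..t} ?G))) (at t within {0..})"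
  proof (rule has_vector_derivative_scaleR)
    show "((\<lambda>s. exp (-s)) has_field_derivative (- exp (-t))) (at t within {0..})"
      by (auto intro!: derivative_eq_intros)
    show "((\<lambda>s. x0 + integral {0..s} ?G) has_vector_derivative ?G t) (at t within {0..})"
      using has_vector_derivative_add[OF has_vector_derivative_const I] by simp
  qed
  moreover have "exp (-t) *\<^sub>R ?G t + (- exp (-t)) *\<^sub>R (x0 + integral {0..t} ?G) = A (u t) - u t"
    using eq t by (simp add: exp_minus scaleR_add_right[symmetric])
  ultimately have "((\<lambda>s. exp (-s) *\<^sub>R (x0 + integral {0..s} ?G)) has_vector_derivative (A (u t) - u t)) (at t within {0..})"
    by simp
  then show ?thesis
    by (rule has_vector_derivative_transform_within[where d=1]) (use eq t in auto)
qed

lemma ode_invariant: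
  fixes A :: "real^'k \<Rightarrow> real^'k" and u :: "real \<Rightarrow> real^'k"
  assumes contu: "continuous_on UNIV u" and contA: "continuous_on UNIV A"
   and eq: "\<forall>t\<ge>0. u t = exp (-t) *\<^sub>R (x0 + integral {0..t} (\<lambda>r. exp r *\<^sub>R A (u r)))"
   and Apos: "\<And>x k. 0 \<le> A x $ k" and Asum: "\<And>x. (\<Sum>k\<in>UNIV. A x $ k) \<le> 1 / \<epsilon>"
   and eps: "\<epsilon> > 0" and x0: "x0 \<in> O_eps \<epsilon>" and t: "0 \<le> t"
  shows "u t \<in> O_eps \<epsilon>"
proof -
  let ?G = "\<lambda>r. exp r *\<^sub>R A (u r)"
  have Gc: "continuous_on UNIV ?G"
    by (intro continuous_intros continuous_on_compose2[OF contA contu]) auto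
  have Gi: "?G integrable_on {0..t}"
    by (rule integrable_continuous_real, rule continuous_on_subset[OF Gc]) auto
  have Gki: "(\<lambda>r. exp r * A (u r) $ k) integrable_on {0..t}" for k
    by (rule integrable_continuous_real, rule continuous_on_subset[of UNIV])
       (auto intro!: continuous_intros continuous_on_compose2[OF contA contu])
  have comp: "u t $ k = exp (-t) * (x0 $ k + integral {0..t} (\<lambda>r. exp r * A (u r) $ k))" for k
    using eq t integral_component_eq_cart[OF Gi, of k] by simp
  have x0p: "0 \<le> x0 $ k" "(\<Sum>k\<in>UNIV. x0 $ k) \<le> 1/\<epsilon>" for k
    using x0 by (auto simp: O_eps_def)
  have nn: "0 \<le> u t $ k" for k
    unfolding comp using x0p Apos
    by (intro mult_nonneg_nonneg add_nonneg_nonneg integral_nonneg Gki) auto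
  have "(\<Sum>k\<in>UNIV. u t $ k) = exp (-t) * ((\<Sum>k\<in>UNIV. x0 $ k) + (\<Sum>k\<in>UNIV. integral {0..t} (\<lambda>r. exp r * A (u r) $ k)))"
    unfolding comp sum.distrib[symmetric] by (simp add: sum_distrib_left)
  also have "(\<Sum>k\<in>UNIV. integral {0..t} (\<lambda>r. exp r * A (u r) $ k)) = integral {0..t} (\<lambda>r. \<Sum>k\<in>UNIV. exp r * A (u r) $ k)"
    by (rule integral_sum[symmetric]) (auto intro: Gki)
  also have "\<dots> \<le> integral {0..t} (\<lambda>r. exp r * (1/\<epsilon>))"
  proof (rule integral_le)
    show "(\<lambda>r. \<Sum>k\<in>UNIV. exp r * A (u r) $ k) integrable_on {0..t}"
      by (rule integrable_sum) (auto intro: Gki)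
    show "(\<lambda>r. exp r * (1/\<epsilon>)) integrable_on {0..t}"
      by (rule integrable_continuous_real) (use eps in \<open>auto intro!: continuous_intros\<close>)
    fix r
    show "(\<Sum>k\<in>UNIV. exp r * A (u r) $ k) \<le> exp r * (1 / \<epsilon>)"
      using mult_left_mono[OF Asum[of "u r"], of "exp r"] by (simp add: sum_distrib_left[symmetric])
  qed
  also have "\<dots> = (exp t - 1) * (1/\<epsilon>)"
    using exp_has_integral[of 1 t] t by (simp add: integral_unique)
  finally have s0: "(\<Sum>k\<in>UNIV. u t $ k) \<le> exp (-t) * ((\<Sum>k\<in>UNIV. x0 $ k) + (exp t - 1) * (1/\<epsilon>))"
    by (simp add: mult_left_mono)
  also have "\<dots> \<le> exp (-t) * (1/\<epsilon> + (exp t - 1) * (1/\<epsilon>))"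
    using x0p(2) by (intro mult_left_mono) auto
  also have "\<dots> = 1/\<epsilon>" by (simp add: algebra_simps exp_minus)
  finally show ?thesis using nn by (auto simp: O_eps_def)
qed

lemma cmp_step:
  fixes x y p :: "real \<Rightarrow> 'a::real_normed_vector" and f :: "'a \<Rightarrow> 'a"
  assumes dx: "\<And>t. a \<le> t \<Longrightarrow> t \<le> a+h \<Longrightarrow> (x has_vector_derivative (f (x t) + p t)) (at t within {a..a+h})"
    and dy: "\<And>t. a \<le> t \<Longrightarrow> t \<le> a+h \<Longrightarrow> (y has_vector_derivative f (y t)) (at t within {a..a+h})"
    and Lip: "\<And>t. a \<le> t \<Longrightarrow> t \<le> a+h \<Longrightarrow> norm (f (x t) - f (y t)) \<le> L * norm (x t - y t)"
    and pb: "\<And>t. a \<le> t \<Longrightarrow> t \<le> a+h \<Longrightarrow> norm (p t) \<le> \<nu>"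
    and h: "0 \<le> h" "h * L \<le> 1/2" and L: "0 \<le> L"
    and t: "a \<le> t" "t \<le> a+h"
  shows "norm (x t - y t) \<le> 2 * (norm (x a - y a) + h * \<nu>)"
proof -
  let ?g = "\<lambda>t. x t - y t"
  have dg: "(?g has_vector_derivative (f (x s) + p s - f (y s))) (at s within {a..a+h})"
    if "a \<le> s" "s \<le> a+h" for s
    using has_vector_derivative_diff[OF dx[OF that] dy[OF that]] .
  have gc: "continuous_on {a..a+h} ?g"
    unfolding continuous_on_eq_continuous_within
    using dg has_vector_derivative_continuous by (metis atLeastAtMost_iff)
  have "\<exists>ts\<in>{a..a+h}. \<forall>s\<in>{a..a+h}. norm (?g s) \<le> norm (?g ts)"
    by (rule continuous_attains_sup) (use h in \<open>auto intro!: continuous_intros gc\<close>)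
  then obtain ts where ts: "ts \<in> {a..a+h}" and tmax: "\<And>s. s \<in> {a..a+h} \<Longrightarrow> norm (?g s) \<le> norm (?g ts)"
    by blast
  define M where "M = norm (?g ts)"
  have "norm (?g ts - ?g a) \<le> (L * M + \<nu>) * norm (ts - a)"
  proof (rule differentiable_bound[where S="{a..ts}" and f'="\<lambda>s d. d *\<^sub>R (f (x s) + p s - f (y s))"])
    show "convex {a..ts}" by simp
    fix s assume s: "s \<in> {a..ts}"
    then have s2: "a \<le> s" "s \<le> a+h" using ts by auto
    show "(?g has_derivative (\<lambda>d. d *\<^sub>R (f (x s) + p s - f (y s)))) (at s within {a..ts})"
      using dg[OF s2] unfolding has_vector_derivative_def
      by (rule has_derivative_subset) (use ts in auto)
    have "onorm (\<lambda>d::real. d *\<^sub>R (f (x s) + p s - f (y s))) = norm (f (x s) + p s - f (y s))"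
      using onorm_scaleR_left[of "\<lambda>d::real. d"] by (simp add: onorm_id bounded_linear_ident)
    also have "\<dots> \<le> norm (f (x s) - f (y s)) + norm (p s)"
      by (metis add_diff_eq diff_add_eq norm_triangle_ineq add.commute)
    also have "\<dots> \<le> L * M + \<nu>"
      using Lip[OF s2] pb[OF s2] tmax[of s] s2 L unfolding M_def
      by (smt (verit) atLeastAtMost_iff mult_left_mono)
    finally show "onorm (\<lambda>d::real. d *\<^sub>R (f (x s) + p s - f (y s))) \<le> L * M + \<nu>" .
  qed (use ts in auto)
  also have "\<dots> \<le> (L * M + \<nu>) * h"
    using ts L pb[of a] h by (intro mult_left_mono) (auto simp: M_def intro: add_nonneg_nonneg order_trans[OF norm_ge_zero])
  finally have "M \<le> norm (?g a) + (L * M + \<nu>) * h"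
    unfolding M_def using norm_triangle_ineq2[of "?g ts" "?g a"] by linarith
  then have A1: "M * (1 - h * L) \<le> norm (?g a) + h * \<nu>" by (simp add: algebra_simps)
  have A2: "M * (1/2) \<le> M * (1 - h * L)" using h by (intro mult_left_mono) (auto simp: M_def)
  have "M * (1/2) \<le> norm (?g a) + h * \<nu>" using order_trans[OF A2 A1] .
  then have "M \<le> 2 * (norm (?g a) + h * \<nu>)" by simp
  moreover have "norm (?g t) \<le> M" using tmax t unfolding M_def by auto
  ultimately show ?thesis by linarith
qed

lemma cmp_iter:
  fixes x y p :: "real \<Rightarrow> 'a::real_normed_vector" and f :: "'a \<Rightarrow> 'a"
  assumes dx: "\<And>t. a \<le> t \<Longrightarrow> (x has_vector_derivative (f (x t) + p t)) (at t within {a..})"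
    and dy: "\<And>t. a \<le> t \<Longrightarrow> (y has_vector_derivative f (y t)) (at t within {a..})"
    and Lip: "\<And>t. a \<le> t \<Longrightarrow> norm (f (x t) - f (y t)) \<le> L * norm (x t - y t)"
    and pb: "\<And>t. a \<le> t \<Longrightarrow> norm (p t) \<le> \<nu>"
    and h: "0 < h" "h \<le> 1" "h * L \<le> 1/2" and L: "0 \<le> L" and nu: "0 \<le> \<nu>"
  shows "a \<le> t \<Longrightarrow> t \<le> a + real n * h \<Longrightarrow> norm (x t - y t) \<le> 4^n * (norm (x a - y a) + \<nu>)"
proof (induction n arbitrary: t)
  case 0
  then have "t = a" by simp
  then show ?case using nu by simp
next
  case (Suc n)
  let ?d = "norm (x a - y a)"
  have p4: "(1::real) \<le> 4^n" by simp
  have dn: "0 \<le> ?d + \<nu>" using nu by simp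
  show ?case
  proof (cases "t \<le> a + real n * h")
    case True
    then have "norm (x t - y t) \<le> 4^n * (?d + \<nu>)" using Suc by auto
    also have "\<dots> \<le> 4^Suc n * (?d + \<nu>)" using dn by (intro mult_right_mono) auto
    finally show ?thesis .
  next
    case False
    define a' where "a' = a + real n * h"
    have a': "a \<le> a'" using h by (simp add: a'_def)
    have ta: "a' \<le> t" "t \<le> a' + h" using False Suc.prems by (auto simp: a'_def algebra_simps)
    have "norm (x t - y t) \<le> 2 * (norm (x a' - y a') + h * \<nu>)"
    proof (rule cmp_step[where f=f and p=p and L=L])
      fix s assume s: "a' \<le> s" "s \<le> a' + h"
      show "(x has_vector_derivative (f (x s) + p s)) (at s within {a'..a'+h})"
        by (rule has_vector_derivative_within_subset[OF dx]) (use s a' in auto)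
      show "(y has_vector_derivative f (y s)) (at s within {a'..a'+h})"
        by (rule has_vector_derivative_within_subset[OF dy]) (use s a' in auto)
      show "norm (f (x s) - f (y s)) \<le> L * norm (x s - y s)" using Lip s a' by auto
      show "norm (p s) \<le> \<nu>" using pb s a' by auto
    qed (use h L ta in auto)
    also have "\<dots> \<le> 2 * (4^n * (?d + \<nu>) + \<nu>)"
    proof -
      have "norm (x a' - y a') \<le> 4^n * (?d + \<nu>)" using Suc.IH[of a'] a' by (simp add: a'_def)
      moreover have "h * \<nu> \<le> \<nu>" using h nu by (simp add: mult_left_le_one_le)
      ultimately show ?thesis by simp
    qed
    also have "\<dots> \<le> 4^Suc n * (?d + \<nu>)"
    proof -
      have "\<nu> \<le> 4^n * (?d + \<nu>)" using p4 dn nu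
        by (metis le_add_same_cancel2 mult_1 mult_right_mono norm_ge_zero order_trans add.commute)
      then show ?thesis by simp
    qed
    finally show ?thesis .
  qed
qed

lemma xexp_bound:
  fixes x :: real
  shows "exp (-\<bar>x\<bar>) * x^2 \<le> x * (exp x - 1)"
proof (cases "x \<ge> 0")
  case True
  have "exp (-\<bar>x\<bar>) * x^2 \<le> 1 * x^2" using True by (intro mult_right_mono) auto
  also have "\<dots> \<le> x * (exp x - 1)"
    using True mult_left_mono[of x "exp x - 1" x] exp_ge_add_one_self[of x] by (simp add: power2_eq_square)
  finally show ?thesis .
next
  case False
  have e: "1 - x \<le> exp (-x)" using exp_ge_add_one_self[of "-x"] by simp
  have "exp x * (1 - x) \<le> exp x * exp (-x)" using e by (intro mult_left_mono) auto
  then have "exp x * (1 - x) \<le> 1" by (simp add: exp_minus)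
  then have "exp x * (-x) \<le> 1 - exp x" by (simp add: algebra_simps)
  then have "(-x) * (exp x * (-x)) \<le> (-x) * (1 - exp x)" using False by (intro mult_left_mono) auto
  then show ?thesis using False by (simp add: power2_eq_square algebra_simps)
qed

lemma sum_F_exp:
  fixes F :: "real^'k"
  assumes s0: "(\<Sum>k\<in>UNIV. F$k) = 0" and R: "\<And>k. \<bar>F$k\<bar> \<le> R"
  shows "exp (-R) * (\<Sum>k\<in>UNIV. (F$k)^2) \<le> (\<Sum>k\<in>UNIV. F$k * exp (F$k))"
proof -
  have "exp (-R) * (\<Sum>k\<in>UNIV. (F$k)^2) = (\<Sum>k\<in>UNIV. exp (-R) * (F$k)^2)"
    by (simp add: sum_distrib_left)
  also have "\<dots> \<le> (\<Sum>k\<in>UNIV. F$k * (exp (F$k) - 1))"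
  proof (rule sum_mono)
    fix k
    have "exp (-R) * (F$k)^2 \<le> exp (-\<bar>F$k\<bar>) * (F$k)^2"
      using R[of k] by (intro mult_right_mono) auto
    also have "\<dots> \<le> F$k * (exp (F$k) - 1)" by (rule xexp_bound)
    finally show "exp (-R) * (F$k)^2 \<le> F$k * (exp (F$k) - 1)" .
  qed
  also have "\<dots> = (\<Sum>k\<in>UNIV. F$k * exp (F$k)) - (\<Sum>k\<in>UNIV. F$k)"
    by (simp add: algebra_simps sum_subtractf)
  finally show ?thesis using s0 by simp
qed

lemma gbar_simp:
  fixes F :: "real^'k" and mu :: "real^'m^'k"
  shows "gbar \<pi> \<gamma> mus (F, mu, w) =
    (let Z = (\<Sum>l\<in>UNIV. \<pi> (F, mu, w) $ l * exp (F$l)) in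
      ((\<chi> k. (1 / real CARD('k)) * (\<Sum>j\<in>UNIV. exp (F$j) / Z) - exp (F$k) / Z),
       (\<chi> k m. exp (F$k) / Z * (mus$k$m - mu$k$m)),
       (\<chi> k. \<pi> (F, mu, w) $ k / \<gamma> mu $ k * (exp (F$k) / Z) - w$k)))"
  by (simp add: gbar_def)

lemma Z_bounds:
  fixes F :: "real^'k" and p :: "real^'k"
  assumes p: "p \<in> prob_eps \<epsilon>" and eps: "\<epsilon> > 0" and R: "norm F \<le> R"
  shows "0 < (\<Sum>l\<in>UNIV. p $ l * exp (F$l))" "(\<Sum>l\<in>UNIV. p $ l * exp (F$l)) \<le> exp R"
proof -
  have pe: "\<And>l. \<epsilon> \<le> p $ l" and ps: "(\<Sum>l\<in>UNIV. p $ l) = 1" using p by (auto simp: prob_eps_def)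
  have "0 < p $ l * exp (F$l)" for l using pe[of l] eps by simp
  then show "0 < (\<Sum>l\<in>UNIV. p $ l * exp (F$l))" by (intro sum_pos) auto
  have "(\<Sum>l\<in>UNIV. p $ l * exp (F$l)) \<le> (\<Sum>l\<in>UNIV. p $ l * exp R)"
  proof (rule sum_mono)
    fix l
    have "F$l \<le> R" using component_le_norm_cart[of F l] R by linarith
    then show "p $ l * exp (F$l) \<le> p $ l * exp R" using pe[of l] eps by (intro mult_left_mono) auto
  qed
  also have "\<dots> = exp R" using ps by (simp add: sum_distrib_right[symmetric])
  finally show "(\<Sum>l\<in>UNIV. p $ l * exp (F$l)) \<le> exp R" .
qed

lemma F_pointwise:
  fixes F :: "real^'k" and p :: "real^'k"
  assumes p: "p \<in> prob_eps \<epsilon>" and eps: "\<epsilon> > 0" and R: "norm F \<le> R"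
    and s0: "(\<Sum>k\<in>UNIV. F$k) = 0"
  defines "Z \<equiv> (\<Sum>l\<in>UNIV. p $ l * exp (F$l))"
  shows "F \<bullet> (\<chi> k. (1 / real CARD('k)) * (\<Sum>j\<in>UNIV. exp (F$j) / Z) - exp (F$k) / Z)
          \<le> - exp (-2*R) * (F \<bullet> F)"
proof -
  have Z: "0 < Z" "Z \<le> exp R" using Z_bounds[OF p eps R] by (auto simp: Z_def)
  have Rk: "\<bar>F$k\<bar> \<le> R" for k using component_le_norm_cart[of F k] R by linarith
  have "F \<bullet> (\<chi> k. (1 / real CARD('k)) * (\<Sum>j\<in>UNIV. exp (F$j) / Z) - exp (F$k) / Z)
      = (\<Sum>k\<in>UNIV. F$k * ((1 / real CARD('k)) * (\<Sum>j\<in>UNIV. exp (F$j) / Z)) - F$k * exp (F$k) / Z)"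
    by (simp add: inner_vec_def right_diff_distrib)
  also have "\<dots> = (\<Sum>k\<in>UNIV. F$k) * ((1 / real CARD('k)) * (\<Sum>j\<in>UNIV. exp (F$j) / Z)) - (\<Sum>k\<in>UNIV. F$k * exp (F$k)) / Z"
    by (simp add: sum_subtractf sum_distrib_right sum_divide_distrib)
  also have "\<dots> = - (\<Sum>k\<in>UNIV. F$k * exp (F$k)) / Z" using s0 by simp
  also have "\<dots> \<le> - (exp (-R) * (F \<bullet> F)) / Z"
  proof -
    have "exp (-R) * (F \<bullet> F) \<le> (\<Sum>k\<in>UNIV. F$k * exp (F$k))"
      using sum_F_exp[OF s0 Rk] by (simp add: inner_vec_def power2_eq_square)
    then show ?thesis using Z by (simp add: divide_right_mono)
  qed
  also have "\<dots> \<le> - (exp (-R) * (F \<bullet> F)) / exp R"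
  proof -
    have "0 \<le> exp (-R) * (F \<bullet> F)" by simp
    then have "(exp (-R) * (F \<bullet> F)) / exp R \<le> (exp (-R) * (F \<bullet> F)) / Z"
      using Z by (intro divide_left_mono) auto
    then show ?thesis by simp
  qed
  also have "\<dots> = - exp (-2*R) * (F \<bullet> F)"
    by (simp add: exp_minus field_simps power2_eq_square exp_double[symmetric] mult_exp_exp)
  finally show ?thesis .
qed

lemma mu_pointwise:
  fixes F :: "real^'k" and p :: "real^'k" and mu mus :: "real^'m^'k"
  assumes p: "p \<in> prob_eps \<epsilon>" and eps: "\<epsilon> > 0" and R: "norm F \<le> R"
  defines "Z \<equiv> (\<Sum>l\<in>UNIV. p $ l * exp (F$l))"
  shows "(mu - mus) \<bullet> (\<chi> k m. exp (F$k) / Z * (mus$k$m - mu$k$m))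
          \<le> - exp (-2*R) * ((mu - mus) \<bullet> (mu - mus))"
proof -
  have Z: "0 < Z" "Z \<le> exp R" using Z_bounds[OF p eps R] by (auto simp: Z_def)
  have ck: "exp (-2*R) \<le> exp (F$k) / Z" for k
  proof -
    have "-R \<le> F$k" using component_le_norm_cart[of F k] R by linarith
    then have "exp (-R) \<le> exp (F$k)" by simp
    then have "exp (-R) / exp R \<le> exp (F$k) / Z"
      using Z by (intro frac_le) auto
    moreover have "exp (-R) / exp R = exp (-2*R)" by (simp add: exp_minus field_simps mult_exp_exp)
    ultimately show ?thesis by simp
  qed
  define S where "S k = (\<Sum>m\<in>UNIV. ((mu - mus)$k$m)^2)" for k
  have S0: "0 \<le> S k" for k by (simp add: S_def sum_nonneg)
  have "(mu - mus) \<bullet> (\<chi> k m. exp (F$k) / Z * (mus$k$m - mu$k$m)) = (\<Sum>k\<in>UNIV. - (exp (F$k) / Z * S k))"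
  proof -
    have e: "(mu - mus)$k$m * (exp (F$k) / Z * (mus$k$m - mu$k$m)) = - (exp (F$k) / Z * ((mu - mus)$k$m)^2)" for k m
    proof -
      have e0: "\<And>x y c::real. (x - y) * (c * (y - x)) = - (c * (x - y)^2)"
        by (simp add: power2_eq_square algebra_simps)
      show ?thesis using e0[of "mu$k$m" "mus$k$m" "exp (F$k) / Z"] by simp
    qed
    have row: "(mu - mus)$k \<bullet> (\<chi> k m. exp (F$k) / Z * (mus$k$m - mu$k$m))$k = - (exp (F$k) / Z * S k)" for k
      unfolding inner_vec_def inner_real_def S_def vec_lambda_beta e sum_negf sum_distrib_left ..
    show ?thesis unfolding inner_vec_def[of "mu - mus"] row ..
  qed
  also have "\<dots> \<le> (\<Sum>k\<in>UNIV. - (exp (-2*R) * S k))"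
  proof (rule sum_mono)
    fix k
    show "- (exp (F$k) / Z * S k) \<le> - (exp (-2*R) * S k)"
      using mult_right_mono[OF ck[of k] S0[of k]] by linarith
  qed
  also have "\<dots> = - exp (-2*R) * ((mu - mus) \<bullet> (mu - mus))"
    unfolding inner_vec_def S_def by (simp add: sum_distrib_left power2_eq_square sum_negf)
  finally show ?thesis .
qed

lemma norm_decay:
  fixes X :: "real \<Rightarrow> 'a::real_inner"
  assumes der: "\<And>t. t \<ge> t0 \<Longrightarrow> (X has_vector_derivative X' t) (at t within {t0..})"
    and ineq: "\<And>t. t \<ge> t0 \<Longrightarrow> X t \<bullet> X' t \<le> - c * (X t \<bullet> X t)" and tt: "t0 \<le> t"
  shows "norm (X t) \<le> exp (- c * (t - t0)) * norm (X t0)"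
proof -
  have d2: "((\<lambda>s. X s \<bullet> X s) has_real_derivative (2 * (X s \<bullet> X' s))) (at s within {t0..})"
    if "t0 \<le> s" for s
  proof -
    have "((\<lambda>s. X s \<bullet> X s) has_derivative (\<lambda>h. X s \<bullet> (h *\<^sub>R X' s) + (h *\<^sub>R X' s) \<bullet> X s)) (at s within {t0..})"
      using der[OF that] unfolding has_vector_derivative_def
      by (intro has_derivative_inner) auto
    moreover have "(\<lambda>h. X s \<bullet> (h *\<^sub>R X' s) + (h *\<^sub>R X' s) \<bullet> X s) = (\<lambda>h. (2 * (X s \<bullet> X' s)) * h)"
      by (auto simp: fun_eq_iff inner_commute algebra_simps)
    ultimately show ?thesis
      by (simp add: has_field_derivative_def)
  qed
  have "X t \<bullet> X t \<le> exp (- (2*c) * (t - t0)) * (X t0 \<bullet> X t0)"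
    by (rule exp_decay[OF d2 _ tt]) (use ineq in auto)
  then have "(norm (X t))^2 \<le> (exp (- c * (t - t0)) * norm (X t0))^2"
    by (simp add: power2_norm_eq_inner power_mult_distrib exp_of_nat_mult[symmetric]
        flip: exp_add) (simp add: power2_eq_square mult_exp_exp[symmetric] algebra_simps)
  then show ?thesis by (rule power2_le_imp_le) simp
qed

lemma hvd_fst: "(f has_vector_derivative f') F \<Longrightarrow> ((\<lambda>x. fst (f x)) has_vector_derivative fst f') F"
  unfolding has_vector_derivative_def by (drule has_derivative_fst) simp

lemma hvd_snd: "(f has_vector_derivative f') F \<Longrightarrow> ((\<lambda>x. snd (f x)) has_vector_derivative snd f') F"
  unfolding has_vector_derivative_def by (drule has_derivative_snd) simp

lemma sol_decay:
  fixes \<theta> :: "real \<Rightarrow> (real^'k) \<times> (real^'m^'k) \<times> (real^'k)"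
  assumes pi_range: "\<forall>\<theta>\<in>Theta \<epsilon>. \<pi> \<theta> \<in> prob_eps \<epsilon>" and eps: "\<epsilon> > 0"
    and sol: "is_solution (Theta_bar \<epsilon>) (\<lambda>\<theta> t. gbar \<pi> \<gamma> mus \<theta>) t0 \<theta>" and t: "t0 \<le> t"
  shows "norm (fst (\<theta> t)) \<le> norm (fst (\<theta> t0))"
    and "norm (fst (\<theta> t)) \<le> exp (- exp (-2 * norm (fst (\<theta> t0))) * (t - t0)) * norm (fst (\<theta> t0))"
    and "norm (fst (snd (\<theta> t)) - mus) \<le> exp (- exp (-2 * norm (fst (\<theta> t0))) * (t - t0)) * norm (fst (snd (\<theta> t0)) - mus)"
proof -
  have pw: "fst (\<theta> s) \<bullet> fst (gbar \<pi> \<gamma> mus (\<theta> s)) \<le> - exp(-2*R) * (fst (\<theta> s) \<bullet> fst (\<theta> s)) \<and>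
     (fst (snd (\<theta> s)) - mus) \<bullet> fst (snd (gbar \<pi> \<gamma> mus (\<theta> s)))
        \<le> - exp(-2*R) * ((fst (snd (\<theta> s)) - mus) \<bullet> (fst (snd (\<theta> s)) - mus))"
    if s: "t0 \<le> s" and R: "norm (fst (\<theta> s)) \<le> R" for s R
  proof -
    obtain F mu w where th: "\<theta> s = (F, mu, w)" by (cases "\<theta> s") auto
    have inTb: "(F,mu,w) \<in> Theta_bar \<epsilon>" using sol s th by (auto simp: is_solution_def)
    then have s0: "(\<Sum>k\<in>UNIV. F$k) = 0" by (auto simp: Theta_bar_def)
    have p: "\<pi> (F,mu,w) \<in> prob_eps \<epsilon>" using pi_range inTb by (auto simp: Theta_def Theta_bar_def)
    have R': "norm F \<le> R" using R th by simp
    show ?thesis unfolding th using F_pointwise[OF p eps R' s0] mu_pointwise[OF p eps R', of mu mus]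
      by (simp add: gbar_simp Let_def)
  qed
  have der: "(\<theta> has_vector_derivative gbar \<pi> \<gamma> mus (\<theta> s)) (at s within {t0..})" if "t0 \<le> s" for s
    using sol that by (auto simp: is_solution_def)
  have mono: "norm (fst (\<theta> s)) \<le> norm (fst (\<theta> t0))" if s: "t0 \<le> s" for s
  proof -
    have "norm (fst (\<theta> s)) \<le> exp (- 0 * (s - t0)) * norm (fst (\<theta> t0))"
    proof (rule norm_decay[OF hvd_fst[OF der] _ s])
      fix r assume r: "t0 \<le> r"
      have "fst (\<theta> r) \<bullet> fst (gbar \<pi> \<gamma> mus (\<theta> r)) \<le> - exp(-2*norm (fst (\<theta> r))) * (fst (\<theta> r) \<bullet> fst (\<theta> r))"
        using pw[OF r order_refl] by blast
      also have "\<dots> \<le> - 0 * (fst (\<theta> r) \<bullet> fst (\<theta> r))" by simp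
      finally show "fst (\<theta> r) \<bullet> fst (gbar \<pi> \<gamma> mus (\<theta> r)) \<le> - 0 * (fst (\<theta> r) \<bullet> fst (\<theta> r))" .
    qed auto
    then show ?thesis by simp
  qed
  show "norm (fst (\<theta> t)) \<le> norm (fst (\<theta> t0))" by (rule mono[OF t])
  show "norm (fst (\<theta> t)) \<le> exp (- exp (-2 * norm (fst (\<theta> t0))) * (t - t0)) * norm (fst (\<theta> t0))"
    by (rule norm_decay[OF hvd_fst[OF der] _ t]) (use pw mono in blast)+
  show "norm (fst (snd (\<theta> t)) - mus) \<le> exp (- exp (-2 * norm (fst (\<theta> t0))) * (t - t0)) * norm (fst (snd (\<theta> t0)) - mus)"
  proof (rule norm_decay[where X="\<lambda>s. fst (snd (\<theta> s)) - mus", OF _ _ t])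
    fix s assume s: "t0 \<le> s"
    show "((\<lambda>s. fst (snd (\<theta> s)) - mus) has_vector_derivative fst (snd (gbar \<pi> \<gamma> mus (\<theta> s)))) (at s within {t0..})"
      using has_vector_derivative_diff[OF hvd_fst[OF hvd_snd[OF der[OF s]]] has_vector_derivative_const[of mus]]
      by simp
    show "(fst (snd (\<theta> s)) - mus) \<bullet> fst (snd (gbar \<pi> \<gamma> mus (\<theta> s)))
        \<le> - exp (-2 * norm (fst (\<theta> t0))) * ((fst (snd (\<theta> s)) - mus) \<bullet> (fst (snd (\<theta> s)) - mus))"
      using pw[OF s mono[OF s]] by blast
  qed
qed

definition afun :: "((real^'k) \<times> (real^'m^'k) \<times> (real^'k) \<Rightarrow> real^'k) \<Rightarrow> (real^'m^'k \<Rightarrow> real^'k) \<Rightarrow> real^'m^'k \<Rightarrow> real^'k \<Rightarrow> real^'k"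
  where "afun \<pi> \<gamma> mus w = (\<chi> k. \<pi> (0, mus, w) $ k / \<gamma> mus $ k)"

definition bfun :: "((real^'k) \<times> (real^'m^'k) \<times> (real^'k) \<Rightarrow> real^'k) \<Rightarrow> (real^'m^'k \<Rightarrow> real^'k)
    \<Rightarrow> (real^'k) \<times> (real^'m^'k) \<times> (real^'k) \<Rightarrow> real^'k"
  where "bfun \<pi> \<gamma> \<theta> = (\<chi> k. \<pi> \<theta> $ k / \<gamma> (fst (snd \<theta>)) $ k *
      (exp (fst \<theta> $ k) / (\<Sum>l\<in>UNIV. \<pi> \<theta> $ l * exp (fst \<theta> $ l))))"

lemma O_eps_closed: "closed (O_eps \<epsilon> :: (real^'k) set)"
proof -
  have "O_eps \<epsilon> = (\<Inter>k. {w::real^'k. 0 \<le> w$k}) \<inter> {w. (\<Sum>k\<in>UNIV. w$k) \<le> 1/\<epsilon>}"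
    by (auto simp: O_eps_def)
  moreover have "closed {w::real^'k. 0 \<le> w$k}" for k
    by (intro closed_Collect_le continuous_intros)
  moreover have "closed {w::real^'k. (\<Sum>k\<in>UNIV. w$k) \<le> 1/\<epsilon>}"
    by (intro closed_Collect_le continuous_intros)
  ultimately show ?thesis by (metis (no_types, lifting) closed_INT closed_Int)
qed

lemma O_eps_convex: "convex (O_eps \<epsilon> :: (real^'k) set)"
proof (rule convexI)
  fix x y :: "real^'k" and u v :: real
  assume xO: "x \<in> O_eps \<epsilon>" and yO: "y \<in> O_eps \<epsilon>" and uv: "0 \<le> u" "0 \<le> v" "u + v = 1"
  have x: "\<forall>k. 0 \<le> x$k" "(\<Sum>k\<in>UNIV. x$k) \<le> 1/\<epsilon>" and y: "\<forall>k. 0 \<le> y$k" "(\<Sum>k\<in>UNIV. y$k) \<le> 1/\<epsilon>"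
    using xO yO by (auto simp: O_eps_def)
  have "\<forall>k. 0 \<le> u * x $ k + v * y $ k" using x y uv by simp
  moreover have "(\<Sum>k\<in>UNIV. u * x $ k + v * y $ k) \<le> 1 / \<epsilon>"
  proof -
    have "(\<Sum>k\<in>UNIV. u * x $ k + v * y $ k) = u * (\<Sum>k\<in>UNIV. x$k) + v * (\<Sum>k\<in>UNIV. y$k)"
      by (simp add: sum.distrib sum_distrib_left)
    also have "\<dots> \<le> u * (1/\<epsilon>) + v * (1/\<epsilon>)"
      using x y uv by (intro add_mono mult_left_mono) auto
    also have "\<dots> = 1/\<epsilon>" using uv by (simp add: add_divide_distrib[symmetric])
    finally show ?thesis .
  qed
  ultimately show "u *\<^sub>R x + v *\<^sub>R y \<in> O_eps \<epsilon>" by (simp add: O_eps_def)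
qed

lemma O_eps_norm: "(w::real^'k) \<in> O_eps \<epsilon> \<Longrightarrow> norm w \<le> 1/\<epsilon>"
  using norm_le_l1_cart[of w] by (auto simp: O_eps_def)

lemma O_eps_bounded: "bounded (O_eps \<epsilon> :: (real^'k) set)"
  unfolding bounded_iff using O_eps_norm by blast

lemma O_eps_compact: "compact (O_eps \<epsilon> :: (real^'k) set)"
  by (metis compact_eq_bounded_closed O_eps_bounded O_eps_closed)

context
  fixes \<epsilon> :: real
    and \<pi> :: "(real^'k) \<times> (real^'m^'k) \<times> (real^'k) \<Rightarrow> real^'k"
    and \<gamma> :: "real^'m^'k \<Rightarrow> real^'k"
    and mus :: "real^'m^'k"
  assumes eps: "\<epsilon> > 0"
    and pi_range: "\<forall>\<theta>\<in>Theta \<epsilon>. \<pi> \<theta> \<in> prob_eps \<epsilon>"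
    and pi_C1: "C1_on (Theta \<epsilon>) \<pi>"
    and gamma_range: "\<forall>mu. \<gamma> mu \<in> prob_eps \<epsilon>"
    and gamma_C1: "C1_on UNIV \<gamma>"
begin

lemma pi_cont: "continuous_on (Theta \<epsilon>) \<pi>"
proof -
  obtain f' where der: "\<And>x. x \<in> Theta \<epsilon> \<Longrightarrow> (\<pi> has_derivative blinfun_apply (f' x)) (at x within Theta \<epsilon>)"
    using pi_C1 unfolding C1_on_def by blast
  show ?thesis unfolding continuous_on_eq_continuous_within
    using der has_derivative_continuous by blast
qed

lemma gamma_cont: "continuous_on UNIV \<gamma>"
proof -
  obtain f' where der: "\<And>x. (\<gamma> has_derivative blinfun_apply (f' x)) (at x within UNIV)"
    using gamma_C1 unfolding C1_on_def by blast
  show ?thesis unfolding continuous_on_eq_continuous_within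
    using der has_derivative_continuous by blast
qed

lemma pi_pos: "\<theta> \<in> Theta \<epsilon> \<Longrightarrow> \<epsilon> \<le> \<pi> \<theta> $ k" "\<theta> \<in> Theta \<epsilon> \<Longrightarrow> (\<Sum>k\<in>UNIV. \<pi> \<theta> $ k) = 1"
  using pi_range by (auto simp: prob_eps_def)

lemma gamma_pos: "\<epsilon> \<le> \<gamma> mu $ k"
  using gamma_range by (auto simp: prob_eps_def)

lemma O_Theta: "w \<in> O_eps \<epsilon> \<Longrightarrow> (F, mu, w) \<in> Theta \<epsilon>"
  by (simp add: Theta_def)

lemma a_props:
  assumes w: "w \<in> O_eps \<epsilon>"
  shows "0 \<le> afun \<pi> \<gamma> mus w $ k" "(\<Sum>k\<in>UNIV. afun \<pi> \<gamma> mus w $ k) \<le> 1/\<epsilon>"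
proof -
  have th: "(0, mus, w) \<in> Theta \<epsilon>" using O_Theta[OF w] .
  show "0 \<le> afun \<pi> \<gamma> mus w $ k"
    using pi_pos(1)[OF th, of k] gamma_pos[of mus k] eps by (simp add: afun_def)
  have "(\<Sum>k\<in>UNIV. afun \<pi> \<gamma> mus w $ k) \<le> (\<Sum>k\<in>UNIV. \<pi> (0, mus, w) $ k / \<epsilon>)"
  proof (rule sum_mono)
    fix k
    show "afun \<pi> \<gamma> mus w $ k \<le> \<pi> (0, mus, w) $ k / \<epsilon>"
      using pi_pos(1)[OF th, of k] gamma_pos[of mus k] eps
      by (simp add: afun_def) (intro divide_left_mono, auto)
  qed
  also have "\<dots> = 1/\<epsilon>" using pi_pos(2)[OF th] by (simp add: sum_divide_distrib[symmetric])
  finally show "(\<Sum>k\<in>UNIV. afun \<pi> \<gamma> mus w $ k) \<le> 1/\<epsilon>" .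
qed

lemma a_lip: "\<exists>La\<ge>0. \<forall>x\<in>O_eps \<epsilon>. \<forall>y\<in>O_eps \<epsilon>. norm (afun \<pi> \<gamma> mus x - afun \<pi> \<gamma> mus y) \<le> La * norm (x - y)"
proof -
  obtain f' where der: "\<And>x. x \<in> Theta \<epsilon> \<Longrightarrow> (\<pi> has_derivative blinfun_apply (f' x)) (at x within Theta \<epsilon>)"
    and fc: "continuous_on (Theta \<epsilon>) f'"
    using pi_C1 unfolding C1_on_def by blast
  define S where "S = {0::real^'k} \<times> {mus} \<times> (O_eps \<epsilon> :: (real^'k) set)"
  have ST: "S \<subseteq> Theta \<epsilon>" by (auto simp: S_def Theta_def)
  have cS: "compact S" unfolding S_def by (intro compact_Times compact_sing O_eps_compact)
  have cvS: "convex S" unfolding S_def by (intro convex_Times convex_singleton O_eps_convex)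
  have "bounded (f' ` S)"
    by (intro compact_imp_bounded compact_continuous_image continuous_on_subset[OF fc ST] cS)
  then obtain B where B: "\<And>x. x \<in> S \<Longrightarrow> norm (f' x) \<le> B" unfolding bounded_iff by blast
  have pl: "norm (\<pi> x - \<pi> y) \<le> B * norm (x - y)" if "x \<in> S" "y \<in> S" for x y
  proof (rule differentiable_bound[OF cvS _ _ that])
    fix z assume z: "z \<in> S"
    show "(\<pi> has_derivative blinfun_apply (f' z)) (at z within S)"
      using der[of z] z ST by (auto intro: has_derivative_subset)
    show "onorm (blinfun_apply (f' z)) \<le> B" using B[OF z] by (simp add: norm_blinfun.rep_eq)
  qed
  show ?thesis
  proof (intro exI[of _ "\<bar>B\<bar> / \<epsilon>"] conjI ballI)
    show "0 \<le> \<bar>B\<bar> / \<epsilon>" using eps by simp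
    fix x y :: "real^'k" assume x: "x \<in> O_eps \<epsilon>" and y: "y \<in> O_eps \<epsilon>"
    let ?v = "\<pi> (0, mus, x) - \<pi> (0, mus, y)"
    have "norm (afun \<pi> \<gamma> mus x - afun \<pi> \<gamma> mus y) \<le> norm ((1/\<epsilon>) *\<^sub>R ?v)"
    proof (rule norm_le_componentwise_cart)
      fix k
      have "\<bar>(afun \<pi> \<gamma> mus x - afun \<pi> \<gamma> mus y) $ k\<bar> = \<bar>?v $ k\<bar> / \<gamma> mus $ k"
        using gamma_pos[of mus k] eps by (simp add: afun_def diff_divide_distrib[symmetric])
      also have "\<dots> \<le> \<bar>?v $ k\<bar> / \<epsilon>"
        using gamma_pos[of mus k] eps by (intro divide_left_mono) auto
      finally show "norm ((afun \<pi> \<gamma> mus x - afun \<pi> \<gamma> mus y) $ k) \<le> norm (((1/\<epsilon>) *\<^sub>R ?v) $ k)"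
        using eps by simp
    qed
    also have "\<dots> = norm ?v / \<epsilon>" using eps by simp
    also have "\<dots> \<le> B * norm (x - y) / \<epsilon>"
    proof -
      have "norm ?v \<le> B * norm ((0::real^'k, mus, x) - (0, mus, y))"
        using pl[of "(0, mus, x)" "(0, mus, y)"] x y by (simp add: S_def)
      also have "norm ((0::real^'k, mus, x) - (0, mus, y)) = norm (x - y)"
        by (simp add: norm_Pair)
      finally show ?thesis using eps by (simp add: divide_right_mono)
    qed
    also have "\<dots> \<le> \<bar>B\<bar> / \<epsilon> * norm (x - y)"
      using eps by (simp add: divide_right_mono mult_right_mono)
    finally show "norm (afun \<pi> \<gamma> mus x - afun \<pi> \<gamma> mus y) \<le> \<bar>B\<bar> / \<epsilon> * norm (x - y)" .
  qed
qed

lemma reduced_exists: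
  assumes s: "0 \<le> s" and x0: "x0 \<in> O_eps \<epsilon>"
  shows "\<exists>w. is_solution (O_eps \<epsilon>) (\<lambda>w t. \<chi> k. \<pi> (0, mus, w) $ k / \<gamma> mus $ k - w $ k) s w \<and> w s = x0"
proof -
  obtain La where La: "0 \<le> La" and Lip: "\<And>x y. x \<in> O_eps \<epsilon> \<Longrightarrow> y \<in> O_eps \<epsilon> \<Longrightarrow>
      norm (afun \<pi> \<gamma> mus x - afun \<pi> \<gamma> mus y) \<le> La * norm (x - y)"
    using a_lip by blast
  define P where "P = closest_point (O_eps \<epsilon> :: (real^'k) set)"
  have O0: "(0::real^'k) \<in> O_eps \<epsilon>" using eps by (simp add: O_eps_def)
  have PO: "P x \<in> O_eps \<epsilon>" for x
    unfolding P_def by (rule closest_point_in_set) (use O_eps_closed O0 in auto)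
  have Pself: "x \<in> O_eps \<epsilon> \<Longrightarrow> P x = x" for x
    unfolding P_def by (rule closest_point_self)
  have PL: "norm (P x - P y) \<le> norm (x - y)" for x y
    using closest_point_lipschitz[OF O_eps_convex O_eps_closed, of \<epsilon> x y] O0
    unfolding P_def dist_norm by auto
  define A where "A x = afun \<pi> \<gamma> mus (P x)" for x
  have AL: "norm (A x - A y) \<le> La * norm (x - y)" for x y
  proof -
    have "norm (A x - A y) \<le> La * norm (P x - P y)" unfolding A_def by (rule Lip[OF PO PO])
    also have "\<dots> \<le> La * norm (x - y)" using PL La by (intro mult_left_mono) auto
    finally show ?thesis .
  qed
  have Apos: "0 \<le> A x $ k" for x k unfolding A_def by (rule a_props(1)[OF PO])
  have Asum: "(\<Sum>k\<in>UNIV. A x $ k) \<le> 1/\<epsilon>" for x unfolding A_def by (rule a_props(2)[OF PO])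
  have Ab: "norm (A x) \<le> 1/\<epsilon>" for x
    using norm_le_l1_cart[of "A x"] Asum[of x] Apos by simp
  have contA: "continuous_on UNIV A"
    by (rule lipschitz_cont[OF _ La]) (simp add: dist_norm AL)
  obtain u where contu: "continuous_on UNIV u"
    and eq: "\<forall>t\<ge>0. u t = exp (-t) *\<^sub>R (x0 + integral {0..t} (\<lambda>r. exp r *\<^sub>R A (u r)))"
    using ode_exists[OF AL La Ab, of x0] by blast
  have uO: "u t \<in> O_eps \<epsilon>" if "0 \<le> t" for t
    by (rule ode_invariant[OF contu contA eq Apos Asum eps x0 that])
  have ud: "(u has_vector_derivative (afun \<pi> \<gamma> mus (u t) - u t)) (at t within {0..})" if "0 \<le> t" for t
    using ode_deriv[OF contu contA eq that] Pself[OF uO[OF that]] by (simp add: A_def)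
  have u0: "u 0 = x0" using eq by simp
  define w where "w t = u (t - s)" for t
  have img: "(\<lambda>t. t - s) ` {s..} = {0..}"
    by (auto simp: image_iff intro!: bexI[of _ "_ + s"])
  show ?thesis
  proof (intro exI conjI)
    show "w s = x0" using u0 by (simp add: w_def)
    show "is_solution (O_eps \<epsilon>) (\<lambda>w t. \<chi> k. \<pi> (0, mus, w) $ k / \<gamma> mus $ k - w $ k) s w"
      unfolding is_solution_def
    proof (intro allI impI conjI)
      fix t assume t: "s \<le> t"
      show "w t \<in> O_eps \<epsilon>" using uO t by (simp add: w_def)
      have D1: "((u \<circ> (\<lambda>t. t - s)) has_vector_derivative (1 *\<^sub>R (afun \<pi> \<gamma> mus (u (t - s)) - u (t - s)))) (at t within {s..})"
      proof (rule vector_diff_chain_within)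
        show "((\<lambda>t. t - s) has_vector_derivative 1) (at t within {s..})"
          by (auto intro!: derivative_eq_intros)
        show "(u has_vector_derivative afun \<pi> \<gamma> mus (u (t - s)) - u (t - s)) (at (t - s) within (\<lambda>t. t - s) ` {s..})"
          unfolding img using ud t by simp
      qed
      have E1: "afun \<pi> \<gamma> mus (u (t - s)) - u (t - s) = (\<chi> k. \<pi> (0, mus, w t) $ k / \<gamma> mus $ k - w t $ k)"
        by (simp add: afun_def w_def vec_eq_iff)
      show "(w has_vector_derivative (\<chi> k. \<pi> (0, mus, w t) $ k / \<gamma> mus $ k - w t $ k)) (at t within {s..})"
      proof -
        have wf: "w = (\<lambda>t. u (t - s))" by (simp add: fun_eq_iff w_def)
        show ?thesis using D1 E1 by (simp add: wf o_def)
      qed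
    qed
  qed
qed

lemma b_cont: "continuous_on (Theta \<epsilon>) (bfun \<pi> \<gamma>)"
proof -
  have pc: "continuous_on (Theta \<epsilon>) (\<lambda>\<theta>. \<pi> \<theta> $ k)" for k by (intro continuous_intros pi_cont)
  have gc: "continuous_on (Theta \<epsilon>) (\<lambda>\<theta>. \<gamma> (fst (snd \<theta>)) $ k)" for k
    by (intro continuous_intros continuous_on_compose2[OF gamma_cont]) auto
  have Zc: "continuous_on (Theta \<epsilon>) (\<lambda>\<theta>. \<Sum>l\<in>UNIV. \<pi> \<theta> $ l * exp (fst \<theta> $ l))"
    by (intro continuous_intros pc)
  have Zpos: "(\<Sum>l\<in>UNIV. \<pi> \<theta> $ l * exp (fst \<theta> $ l)) \<noteq> 0" if "\<theta> \<in> Theta \<epsilon>" for \<theta>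
    using Z_bounds(1)[where F="fst \<theta>" and R="norm (fst \<theta>)" and p="\<pi> \<theta>" and \<epsilon>=\<epsilon>] pi_range that eps by auto
  have gpos: "\<gamma> (fst (snd \<theta>)) $ k \<noteq> 0" for \<theta> k using gamma_pos[of "fst (snd \<theta>)" k] eps by simp
  show ?thesis unfolding bfun_def
    by (intro continuous_on_vec_lambda continuous_on_mult continuous_on_divide pc gc Zc continuous_intros)
       (auto simp: Zpos gpos)
qed

lemma b_a: "w \<in> O_eps \<epsilon> \<Longrightarrow> bfun \<pi> \<gamma> (0, mus, w) = afun \<pi> \<gamma> mus w"
  using pi_pos(2)[OF O_Theta, of w 0 mus] by (simp add: bfun_def afun_def)

lemma b_uc:
  assumes nu: "\<nu> > 0"
  shows "\<exists>\<sigma>>0. \<sigma> \<le> 1 \<and> (\<forall>F mu w. w \<in> O_eps \<epsilon> \<longrightarrow> norm F < \<sigma> \<longrightarrow> norm (mu - mus) < \<sigma> \<longrightarrow>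
      norm (bfun \<pi> \<gamma> (F, mu, w) - afun \<pi> \<gamma> mus w) < \<nu>)"
proof -
  define C where "C = cball (0::real^'k) 1 \<times> cball mus 1 \<times> (O_eps \<epsilon> :: (real^'k) set)"
  have CT: "C \<subseteq> Theta \<epsilon>" by (auto simp: C_def Theta_def)
  have cC: "compact C" unfolding C_def by (intro compact_Times compact_cball O_eps_compact)
  have "uniformly_continuous_on C (bfun \<pi> \<gamma>)"
    by (rule compact_uniformly_continuous[OF continuous_on_subset[OF b_cont CT] cC])
  then obtain d where d: "d > 0" and dd: "\<And>x x'. x \<in> C \<Longrightarrow> x' \<in> C \<Longrightarrow> dist x' x < d \<Longrightarrow> dist (bfun \<pi> \<gamma> x') (bfun \<pi> \<gamma> x) < \<nu>"
    unfolding uniformly_continuous_on_def using nu by metis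
  show ?thesis
  proof (intro exI[of _ "min 1 (d/2)"] conjI allI impI)
    show "0 < min 1 (d/2)" using d by simp
    show "min 1 (d/2) \<le> 1" by simp
    fix F :: "real^'k" and mu :: "real^'m^'k" and w :: "real^'k"
    assume w: "w \<in> O_eps \<epsilon>" and F: "norm F < min 1 (d/2)" and mu: "norm (mu - mus) < min 1 (d/2)"
    have x1: "(F, mu, w) \<in> C" using F mu w by (auto simp: C_def dist_norm norm_minus_commute)
    have x0: "(0, mus, w) \<in> C" using w by (auto simp: C_def)
    have "dist (F, mu, w) (0, mus, w) \<le> norm F + norm (mu - mus)"
    proof -
      have "dist (F, mu, w) (0, mus, w) = norm (F, mu - mus, 0::real^'k)" by (simp add: dist_norm)
      also have "\<dots> \<le> norm F + norm (mu - mus, 0::real^'k)" by (rule norm_Pair_le)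
      also have "norm (mu - mus, 0::real^'k) = norm (mu - mus)" by (simp add: norm_Pair)
      finally show ?thesis .
    qed
    also have "\<dots> < d" using F mu by simp
    finally have "dist (bfun \<pi> \<gamma> (F, mu, w)) (bfun \<pi> \<gamma> (0, mus, w)) < \<nu>" using dd[OF x0 x1] by simp
    then show "norm (bfun \<pi> \<gamma> (F, mu, w) - afun \<pi> \<gamma> mus w) < \<nu>" using b_a[OF w] by (simp add: dist_norm)
  qed
qed

end

lemma gbar_o: "snd (snd (gbar \<pi> \<gamma> mus \<theta>)) = bfun \<pi> \<gamma> \<theta> - snd (snd \<theta>)"
  by (cases \<theta>) (simp add: gbar_simp bfun_def Let_def vec_eq_iff)

lemma norm3_le:
  fixes x :: "'a::real_normed_vector \<times> 'b::real_normed_vector \<times> 'c::real_normed_vector"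
  shows "norm x \<le> norm (fst x) + norm (fst (snd x)) + norm (snd (snd x))"
    and "norm (fst x) \<le> norm x" and "norm (fst (snd x)) \<le> norm x" and "norm (snd (snd x)) \<le> norm x"
proof -
  obtain a b c where x: "x = (a, b, c)" by (cases x) auto
  show "norm x \<le> norm (fst x) + norm (fst (snd x)) + norm (snd (snd x))"
    unfolding x using norm_Pair_le[of a "(b,c)"] norm_Pair_le[of b c] by simp
  show "norm (fst x) \<le> norm x" unfolding x by (simp add: norm_fst_le)
  show "norm (fst (snd x)) \<le> norm x" unfolding x using norm_fst_le[of b c] norm_snd_le[of "(b,c)" a]
    by simp
  show "norm (snd (snd x)) \<le> norm x" unfolding x using norm_snd_le[of c b] norm_snd_le[of "(b,c)" a]
    by simp
qed

lemma exp_small: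
  fixes \<rho> m X R t :: real
  assumes "0 < \<rho>" "0 < m" "0 \<le> X" "X < \<rho>" "R \<le> \<rho>" "max 0 (ln (\<rho>/m) / exp (-2*\<rho>)) \<le> t"
  shows "exp (- exp (-2*R) * t) * X < m"
proof -
  let ?c = "exp (-2*\<rho>)"
  have c: "0 < ?c" by simp
  have t0: "0 \<le> t" using assms(6) by simp
  have "?c \<le> exp (-2*R)" using assms(5) by simp
  then have "?c * t \<le> exp (-2*R) * t" using t0 by (intro mult_right_mono) auto
  moreover have "ln (\<rho>/m) \<le> ?c * t"
  proof -
    have "ln (\<rho>/m) / ?c \<le> t" using assms(6) by simp
    then show ?thesis using c by (simp add: divide_le_eq mult.commute)
  qed
  ultimately have "ln (\<rho>/m) \<le> exp (-2*R) * t" by linarith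
  then have e: "exp (- exp (-2*R) * t) \<le> exp (- ln (\<rho>/m))" by simp
  also have "exp (- ln (\<rho>/m)) = m / \<rho>" using assms(1,2) by (simp add: exp_minus)
  finally have e2: "exp (- exp (-2*R) * t) \<le> m / \<rho>" .
  have "exp (- exp (-2*R) * t) * X < exp (- exp (-2*R) * t) * \<rho>"
    using assms(4) by simp
  also have "\<dots> \<le> m / \<rho> * \<rho>" using e2 assms(1) by (intro mult_right_mono) auto
  also have "\<dots> = m" using assms(1) by simp
  finally show ?thesis .
qed

theorem proposition2:
  fixes \<epsilon> :: real
    and \<pi> :: "(real^'k) \<times> (real^'m^'k) \<times> (real^'k) \<Rightarrow> real^'k"
    and \<gamma> :: "real^'m^'k \<Rightarrow> real^'k"
    and mus :: "real^'m^'k"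
  assumes K2: "CARD('k) \<ge> 2"
    and eps: "\<epsilon> > 0"
    and pi_range: "\<forall>\<theta>\<in>Theta \<epsilon>. \<pi> \<theta> \<in> prob_eps \<epsilon>"
    and pi_C1: "C1_on (Theta \<epsilon>) \<pi>"
    and gamma_range: "\<forall>mu. \<gamma> mu \<in> prob_eps \<epsilon>"
    and gamma_C1: "C1_on UNIV \<gamma>"
    and reduced_GAS: "GAS (O_eps \<epsilon>)
                        (\<lambda>w t. \<chi> k. \<pi> (0, mus, w) $ k / \<gamma> mus $ k - w $ k) 1"
  shows "GAS (Theta_bar \<epsilon>) (\<lambda>\<theta> t. gbar \<pi> \<gamma> mus \<theta>) (0, mus, 1)"
proof -
  note ctx = eps pi_range pi_C1 gamma_range gamma_C1
  let ?O = "O_eps \<epsilon> :: (real^'k) set"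
  let ?h = "\<lambda>w t. \<chi> k. \<pi> (0, mus, w) $ k / \<gamma> mus $ k - w $ k"
  let ?a = "afun \<pi> \<gamma> mus"
  let ?b = "bfun \<pi> \<gamma>"
  let ?g = "\<lambda>\<theta> t. gbar \<pi> \<gamma> mus \<theta>"
  let ?Tb = "Theta_bar \<epsilon> :: ((real^'k) \<times> (real^'m^'k) \<times> (real^'k)) set"
  have one: "1 \<in> ?O" and eq0: "?h 1 0 = 0" using reduced_GAS by (auto simp: GAS_def)
  have S1: "\<forall>\<eta>>0. \<exists>\<delta>>0. \<forall>t0\<ge>0. \<forall>z. is_solution ?O ?h t0 z \<and> norm (z t0 - 1) < \<delta>
          \<longrightarrow> (\<forall>t\<ge>t0. norm (z t - 1) < \<eta>)"
    using reduced_GAS unfolding GAS_def by blast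
  have S2: "\<forall>\<eta>>0. \<forall>\<rho>>0. \<exists>T. \<forall>t0\<ge>0. \<forall>z. is_solution ?O ?h t0 z \<and> norm (z t0 - 1) < \<rho>
          \<longrightarrow> (\<forall>t\<ge>t0 + T. norm (z t - 1) < \<eta>)"
    using reduced_GAS unfolding GAS_def by blast
  define \<rho>O where "\<rho>O = 1/\<epsilon> + norm (1::real^'k) + 1"
  have \<rho>Opos: "\<rho>O > 0" using eps by (simp add: \<rho>O_def add_pos_nonneg)
  have \<rho>O: "norm (w - 1) < \<rho>O" if "w \<in> ?O" for w
  proof -
    have "norm (w - 1) \<le> norm w + norm (1::real^'k)" by (rule norm_triangle_ineq4)
    also have "\<dots> \<le> 1/\<epsilon> + norm (1::real^'k)" using O_eps_norm[OF that] by simp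
    finally show ?thesis by (simp add: \<rho>O_def)
  qed
  obtain La where La: "0 \<le> La" and Lip: "\<And>x y. x \<in> ?O \<Longrightarrow> y \<in> ?O \<Longrightarrow> norm (?a x - ?a y) \<le> La * norm (x - y)"
    using a_lip[OF ctx, of mus] by blast
  define L where "L = La + 1"
  have L: "0 \<le> L" "1 \<le> L" using La by (auto simp: L_def)
  define f where "f v = ?a v - v" for v
  have fL: "norm (f x - f y) \<le> L * norm (x - y)" if "x \<in> ?O" "y \<in> ?O" for x y
  proof -
    have "norm (f x - f y) = norm ((?a x - ?a y) - (x - y))" by (simp add: f_def algebra_simps)
    also have "\<dots> \<le> norm (?a x - ?a y) + norm (x - y)" by (rule norm_triangle_ineq4)
    also have "\<dots> \<le> La * norm (x - y) + norm (x - y)" using Lip[OF that] by simp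
    finally show ?thesis by (simp add: L_def algebra_simps)
  qed
  define h0 where "h0 = min 1 (1/(2*L))"
  have h0: "0 < h0" "h0 \<le> 1" "h0 * L \<le> 1/2"
  proof -
    show "0 < h0" "h0 \<le> 1" using L by (auto simp: h0_def)
    have "h0 * L \<le> (1/(2*L)) * L" using L by (intro mult_right_mono) (auto simp: h0_def)
    also have "\<dots> = 1/2" using L by simp
    finally show "h0 * L \<le> 1/2" .
  qed
  have solO: "snd (snd (\<theta> t)) \<in> ?O" if "is_solution ?Tb ?g t0 \<theta>" "t0 \<le> t" for \<theta> t0 t
    using that by (auto simp: is_solution_def Theta_bar_def split: prod.splits)
  have solder: "((\<lambda>t. snd (snd (\<theta> t))) has_vector_derivative
       (f (snd (snd (\<theta> t))) + (?b (\<theta> t) - ?a (snd (snd (\<theta> t)))))) (at t within {s..})"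
    if "is_solution ?Tb ?g t0 \<theta>" "t0 \<le> s" "s \<le> t" for \<theta> t0 s t
  proof -
    have "(\<theta> has_vector_derivative gbar \<pi> \<gamma> mus (\<theta> t)) (at t within {t0..})"
      using that by (auto simp: is_solution_def)
    then have "((\<lambda>t. snd (snd (\<theta> t))) has_vector_derivative snd (snd (gbar \<pi> \<gamma> mus (\<theta> t)))) (at t within {s..})"
      using that by (intro has_vector_derivative_within_subset[OF hvd_snd[OF hvd_snd]]) auto
    then show ?thesis by (simp add: gbar_o f_def)
  qed
  have CMP: "norm (snd (snd (\<theta> t)) - w t) \<le> 4^N * \<nu>"
    if sol: "is_solution ?Tb ?g t0 \<theta>" and t0s: "t0 \<le> s" and nu: "0 \<le> \<nu>"
      and pb: "\<forall>t\<ge>s. norm (?b (\<theta> t) - ?a (snd (snd (\<theta> t)))) \<le> \<nu>"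
      and w: "is_solution ?O ?h s w" and ws: "w s = snd (snd (\<theta> s))"
      and t: "s \<le> t" "t \<le> s + real N * h0"
    for \<theta> t0 s \<nu> N t w
  proof -
    have "norm (snd (snd (\<theta> t)) - w t) \<le> 4^N * (norm (snd (snd (\<theta> s)) - w s) + \<nu>)"
    proof (rule cmp_iter[where f=f and p="\<lambda>t. ?b (\<theta> t) - ?a (snd (snd (\<theta> t)))" and L=L and h=h0])
      fix r assume r: "s \<le> r"
      show "((\<lambda>t. snd (snd (\<theta> t))) has_vector_derivative
          f (snd (snd (\<theta> r))) + (?b (\<theta> r) - ?a (snd (snd (\<theta> r))))) (at r within {s..})"
        by (rule solder[OF sol t0s r])
      have "(w has_vector_derivative ?h (w r) r) (at r within {s..})" using w r by (auto simp: is_solution_def)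
      moreover have "?h (w r) r = f (w r)" by (simp add: f_def afun_def vec_eq_iff)
      ultimately show "(w has_vector_derivative f (w r)) (at r within {s..})" by simp
      show "norm (f (snd (snd (\<theta> r))) - f (w r)) \<le> L * norm (snd (snd (\<theta> r)) - w r)"
        using fL solO[OF sol] w r t0s by (auto simp: is_solution_def)
      show "norm (?b (\<theta> r) - ?a (snd (snd (\<theta> r)))) \<le> \<nu>" using pb r by auto
    qed (use h0 L nu t in auto)
    then show ?thesis using ws by simp
  qed
  have WIN: "\<exists>\<nu>>0. \<exists>T\<ge>0. \<exists>\<delta>>0. \<forall>\<theta> t0 s. is_solution ?Tb ?g t0 \<theta> \<longrightarrow> 0 \<le> t0 \<longrightarrow> t0 \<le> s \<longrightarrow>
      (\<forall>t\<ge>s. norm (?b (\<theta> t) - ?a (snd (snd (\<theta> t)))) \<le> \<nu>) \<longrightarrow>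
      (\<forall>t\<ge>s+T. norm (snd (snd (\<theta> t)) - 1) < \<eta>) \<and>
      (norm (snd (snd (\<theta> s)) - 1) < \<delta> \<longrightarrow> (\<forall>t\<ge>s. norm (snd (snd (\<theta> t)) - 1) < \<eta>))"
    if \<eta>: "\<eta> > 0" for \<eta>
  proof -
    have \<eta>2: "\<eta>/2 > 0" using \<eta> by simp
    obtain \<delta> where \<delta>: "\<delta> > 0" and \<delta>s: "\<And>t0 z t. t0 \<ge> 0 \<Longrightarrow> is_solution ?O ?h t0 z \<Longrightarrow> norm (z t0 - 1) < \<delta>
        \<Longrightarrow> t \<ge> t0 \<Longrightarrow> norm (z t - 1) < \<eta>/2"
      using S1 \<eta>2 by meson
    obtain T0 where T0: "\<And>t0 z t. t0 \<ge> 0 \<Longrightarrow> is_solution ?O ?h t0 z \<Longrightarrow> norm (z t0 - 1) < \<rho>O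
        \<Longrightarrow> t \<ge> t0 + T0 \<Longrightarrow> norm (z t - 1) < \<eta>/2"
      using S2 \<eta>2 \<rho>Opos by meson
    define T where "T = max 0 T0"
    define N where "N = nat \<lceil>T / h0\<rceil>"
    have T: "0 \<le> T" "T0 \<le> T" by (auto simp: T_def)
    have TN: "T \<le> real N * h0"
    proof -
      have "T / h0 \<le> real N" using T h0 by (simp add: N_def)
      then show ?thesis using h0 by (simp add: divide_le_eq)
    qed
    define \<nu> where "\<nu> = \<eta> / (4 * 4^N)"
    have \<nu>: "\<nu> > 0" using \<eta> by (simp add: \<nu>_def)
    have \<nu>b: "4^N * \<nu> < \<eta>/2" using \<eta> by (simp add: \<nu>_def)
    have inner: "(\<forall>t\<ge>s+T. norm (snd (snd (\<theta> t)) - 1) < \<eta>) \<and>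
        (norm (snd (snd (\<theta> s)) - 1) < \<delta> \<longrightarrow> (\<forall>t\<ge>s. norm (snd (snd (\<theta> t)) - 1) < \<eta>))"
      if sol: "is_solution ?Tb ?g t0 \<theta>" and t00: "0 \<le> t0" and t0s: "t0 \<le> s"
        and pb: "\<forall>t\<ge>s. norm (?b (\<theta> t) - ?a (snd (snd (\<theta> t)))) \<le> \<nu>" for \<theta> t0 s
    proof -
      have part1: "norm (snd (snd (\<theta> t)) - 1) < \<eta>" if t: "s + T \<le> t" for t
      proof -
        define s' where "s' = t - T"
        have s': "s \<le> s'" "0 \<le> s'" "t0 \<le> s'" using t t00 t0s by (auto simp: s'_def)
        obtain w where w: "is_solution ?O ?h s' w" and ws: "w s' = snd (snd (\<theta> s'))"
          using reduced_exists[OF ctx s'(2) solO[OF sol s'(3)]] by blast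
        have "norm (w t - 1) < \<eta>/2"
          by (rule T0[OF s'(2) w]) (use ws \<rho>O solO[OF sol s'(3)] T in \<open>auto simp: s'_def\<close>)
        moreover have "norm (snd (snd (\<theta> t)) - w t) \<le> 4^N * \<nu>"
          by (rule CMP[OF sol s'(3) _ _ w ws]) (use \<nu> pb s' TN t T in \<open>auto simp: s'_def\<close>)
        ultimately show ?thesis using \<nu>b norm_triangle_ineq[of "snd (snd (\<theta> t)) - w t" "w t - 1"] by simp
      qed
      have A: "\<forall>t\<ge>s+T. norm (snd (snd (\<theta> t)) - 1) < \<eta>" using part1 by blast
      have C: "\<forall>t\<ge>s. norm (snd (snd (\<theta> t)) - 1) < \<eta>" if os: "norm (snd (snd (\<theta> s)) - 1) < \<delta>"
      proof (intro allI impI)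
        fix t assume ts: "s \<le> t"
        show "norm (snd (snd (\<theta> t)) - 1) < \<eta>"
        proof (cases "s + T \<le> t")
          case True then show ?thesis by (rule part1)
        next
          case False
          have s0: "0 \<le> s" using t00 t0s by simp
          obtain w where w: "is_solution ?O ?h s w" and ws: "w s = snd (snd (\<theta> s))"
            using reduced_exists[OF ctx s0 solO[OF sol t0s]] by blast
          have "norm (w t - 1) < \<eta>/2"
            by (rule \<delta>s[OF s0 w]) (use ws os ts in auto)
          moreover have "norm (snd (snd (\<theta> t)) - w t) \<le> 4^N * \<nu>"
            by (rule CMP[OF sol t0s _ _ w ws]) (use \<nu> pb TN ts False in auto)
          ultimately show ?thesis using \<nu>b norm_triangle_ineq[of "snd (snd (\<theta> t)) - w t" "w t - 1"] by simp
        qed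
      qed
      show "(\<forall>t\<ge>s+T. norm (snd (snd (\<theta> t)) - 1) < \<eta>) \<and>
        (norm (snd (snd (\<theta> s)) - 1) < \<delta> \<longrightarrow> (\<forall>t\<ge>s. norm (snd (snd (\<theta> t)) - 1) < \<eta>))"
        using A C by blast
    qed
    show ?thesis using inner \<nu> T(1) \<delta> by blast
  qed
  have eqm: "gbar \<pi> \<gamma> mus (0, mus, 1) = 0"
  proof -
    have Z1: "(\<Sum>l\<in>UNIV. \<pi> (0, mus, 1) $ l) = 1"
      using pi_pos(2)[OF ctx O_Theta[OF ctx one]] by simp
    have ok: "\<pi> (0, mus, 1) $ k / \<gamma> mus $ k = 1" for k
      using eq0 gamma_pos[OF ctx, of mus k] eps by (simp add: vec_eq_iff)
    show ?thesis by (simp add: gbar_simp Let_def Z1 vec_eq_iff ok zero_prod_def)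
  qed
  have split: "z = (fst z, fst (snd z), snd (snd z))" for z :: "(real^'k) \<times> (real^'m^'k) \<times> (real^'k)"
    by simp
  have stab: "\<forall>\<eta>>0. \<exists>\<delta>>0. \<forall>t0\<ge>0. \<forall>z. is_solution ?Tb ?g t0 z \<and> norm (z t0 - (0, mus, 1)) < \<delta>
          \<longrightarrow> (\<forall>t\<ge>t0. norm (z t - (0, mus, 1)) < \<eta>)"
  proof (intro allI impI)
    fix \<eta> :: real assume \<eta>: "\<eta> > 0"
    have \<eta>3: "\<eta>/3 > 0" using \<eta> by simp
    obtain \<nu> T \<delta>o where \<nu>: "\<nu> > 0" and \<delta>o: "\<delta>o > 0" and W: "\<And>\<theta> t0 s. is_solution ?Tb ?g t0 \<theta> \<Longrightarrow> 0 \<le> t0 \<Longrightarrow> t0 \<le> s \<Longrightarrow>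
      (\<forall>t\<ge>s. norm (?b (\<theta> t) - ?a (snd (snd (\<theta> t)))) \<le> \<nu>) \<Longrightarrow>
      norm (snd (snd (\<theta> s)) - 1) < \<delta>o \<Longrightarrow> (\<forall>t\<ge>s. norm (snd (snd (\<theta> t)) - 1) < \<eta>/3)"
      using WIN[OF \<eta>3] by metis
    obtain \<sigma> where \<sigma>: "\<sigma> > 0" and UC: "\<And>F mu w. w \<in> ?O \<Longrightarrow> norm F < \<sigma> \<Longrightarrow> norm (mu - mus) < \<sigma> \<Longrightarrow>
        norm (?b (F, mu, w) - ?a w) < \<nu>"
      using b_uc[OF ctx \<nu>, of mus] by blast
    define \<delta> where "\<delta> = min (min (\<eta>/3) \<sigma>) \<delta>o"
    show "\<exists>\<delta>>0. \<forall>t0\<ge>0. \<forall>z. is_solution ?Tb ?g t0 z \<and> norm (z t0 - (0, mus, 1)) < \<delta>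
          \<longrightarrow> (\<forall>t\<ge>t0. norm (z t - (0, mus, 1)) < \<eta>)"
    proof (intro exI[of _ \<delta>] conjI allI impI)
      show "\<delta> > 0" using \<eta> \<sigma> \<delta>o by (simp add: \<delta>_def)
      fix t0 :: real and z t
      assume t00: "0 \<le> t0" and zz: "is_solution ?Tb ?g t0 z \<and> norm (z t0 - (0, mus, 1)) < \<delta>" and t: "t0 \<le> t"
      have sol: "is_solution ?Tb ?g t0 z" and n0: "norm (z t0 - (0, mus, 1)) < \<delta>" using zz by auto
      have F0: "norm (fst (z t0)) < \<delta>" using norm3_le(2)[of "z t0 - (0,mus,1)"] n0 by simp
      have M0: "norm (fst (snd (z t0)) - mus) < \<delta>" using norm3_le(3)[of "z t0 - (0,mus,1)"] n0 by simp
      have O0: "norm (snd (snd (z t0)) - 1) < \<delta>" using norm3_le(4)[of "z t0 - (0,mus,1)"] n0 by simp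
      have Fs: "norm (fst (z s)) \<le> norm (fst (z t0))" if "t0 \<le> s" for s
        using sol_decay(1)[OF pi_range eps sol that] .
      have Ms: "norm (fst (snd (z s)) - mus) \<le> norm (fst (snd (z t0)) - mus)" if s: "t0 \<le> s" for s
      proof -
        have "exp (- exp (-2 * norm (fst (z t0))) * (s - t0)) \<le> 1" using s by (simp add: mult_nonneg_nonneg)
        then have "exp (- exp (-2 * norm (fst (z t0))) * (s - t0)) * norm (fst (snd (z t0)) - mus) \<le> norm (fst (snd (z t0)) - mus)"
          by (simp add: mult_left_le_one_le)
        then show ?thesis using sol_decay(3)[OF pi_range eps sol s] by linarith
      qed
      have pb: "\<forall>s\<ge>t0. norm (?b (z s) - ?a (snd (snd (z s)))) \<le> \<nu>"
      proof (intro allI impI)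
        fix s assume s: "t0 \<le> s"
        have "norm (?b (fst (z s), fst (snd (z s)), snd (snd (z s))) - ?a (snd (snd (z s)))) < \<nu>"
          by (rule UC) (use solO[OF sol s] Fs[OF s] Ms[OF s] F0 M0 in \<open>auto simp: \<delta>_def\<close>)
        then show "norm (?b (z s) - ?a (snd (snd (z s)))) \<le> \<nu>" by simp
      qed
      have Ot: "norm (snd (snd (z t)) - 1) < \<eta>/3"
        using W[OF sol t00 order_refl pb] O0 t by (auto simp: \<delta>_def)
      have "norm (z t - (0, mus, 1)) \<le> norm (fst (z t)) + norm (fst (snd (z t)) - mus) + norm (snd (snd (z t)) - 1)"
        using norm3_le(1)[of "z t - (0,mus,1)"] by simp
      also have "\<dots> < \<eta>/3 + \<eta>/3 + \<eta>/3"
        using Fs[OF t] Ms[OF t] F0 M0 Ot by (intro add_strict_mono) (auto simp: \<delta>_def)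
      finally show "norm (z t - (0, mus, 1)) < \<eta>" by simp
    qed
  qed
  have attr: "\<forall>\<eta>>0. \<forall>\<rho>>0. \<exists>T. \<forall>t0\<ge>0. \<forall>z. is_solution ?Tb ?g t0 z \<and> norm (z t0 - (0, mus, 1)) < \<rho>
          \<longrightarrow> (\<forall>t\<ge>t0 + T. norm (z t - (0, mus, 1)) < \<eta>)"
  proof (intro allI impI)
    fix \<eta> \<rho> :: real assume \<eta>: "\<eta> > 0" and \<rho>: "\<rho> > 0"
    have \<eta>3: "\<eta>/3 > 0" using \<eta> by simp
    obtain \<nu> T where \<nu>: "\<nu> > 0" and Tn: "0 \<le> T" and W: "\<And>\<theta> t0 s. is_solution ?Tb ?g t0 \<theta> \<Longrightarrow> 0 \<le> t0 \<Longrightarrow> t0 \<le> s \<Longrightarrow>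
      (\<forall>t\<ge>s. norm (?b (\<theta> t) - ?a (snd (snd (\<theta> t)))) \<le> \<nu>) \<Longrightarrow>
      (\<forall>t\<ge>s+T. norm (snd (snd (\<theta> t)) - 1) < \<eta>/3)"
      using WIN[OF \<eta>3] by metis
    obtain \<sigma> where \<sigma>: "\<sigma> > 0" and UC: "\<And>F mu w. w \<in> ?O \<Longrightarrow> norm F < \<sigma> \<Longrightarrow> norm (mu - mus) < \<sigma> \<Longrightarrow>
        norm (?b (F, mu, w) - ?a w) < \<nu>"
      using b_uc[OF ctx \<nu>, of mus] by blast
    define m where "m = min (\<eta>/3) \<sigma>"
    have m: "0 < m" using \<eta> \<sigma> by (simp add: m_def)
    define T1 where "T1 = max 0 (ln (\<rho>/m) / exp (-2*\<rho>))"
    have T1: "0 \<le> T1" by (simp add: T1_def)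
    show "\<exists>T. \<forall>t0\<ge>0. \<forall>z. is_solution ?Tb ?g t0 z \<and> norm (z t0 - (0, mus, 1)) < \<rho>
          \<longrightarrow> (\<forall>t\<ge>t0 + T. norm (z t - (0, mus, 1)) < \<eta>)"
    proof (intro exI[of _ "T1 + T"] allI impI)
      fix t0 :: real and z t
      assume t00: "0 \<le> t0" and zz: "is_solution ?Tb ?g t0 z \<and> norm (z t0 - (0, mus, 1)) < \<rho>"
        and t: "t0 + (T1 + T) \<le> t"
      have sol: "is_solution ?Tb ?g t0 z" and n0: "norm (z t0 - (0, mus, 1)) < \<rho>" using zz by auto
      have F0: "norm (fst (z t0)) < \<rho>" using norm3_le(2)[of "z t0 - (0,mus,1)"] n0 by simp
      have M0: "norm (fst (snd (z t0)) - mus) < \<rho>" using norm3_le(3)[of "z t0 - (0,mus,1)"] n0 by simp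
      have Fs: "norm (fst (z s)) < m" if s: "t0 + T1 \<le> s" for s
      proof -
        have "norm (fst (z s)) \<le> exp (- exp (-2 * norm (fst (z t0))) * (s - t0)) * norm (fst (z t0))"
          using sol_decay(2)[OF pi_range eps sol] s T1 by simp
        also have "\<dots> < m"
          by (rule exp_small[OF \<rho> m]) (use F0 s in \<open>auto simp: T1_def\<close>)
        finally show ?thesis .
      qed
      have Ms: "norm (fst (snd (z s)) - mus) < m" if s: "t0 + T1 \<le> s" for s
      proof -
        have "norm (fst (snd (z s)) - mus) \<le> exp (- exp (-2 * norm (fst (z t0))) * (s - t0)) * norm (fst (snd (z t0)) - mus)"
          using sol_decay(3)[OF pi_range eps sol] s T1 by simp
        also have "\<dots> < m"
          by (rule exp_small[OF \<rho> m]) (use F0 M0 s in \<open>auto simp: T1_def\<close>)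
        finally show ?thesis .
      qed
      have pb: "\<forall>s\<ge>t0 + T1. norm (?b (z s) - ?a (snd (snd (z s)))) \<le> \<nu>"
      proof (intro allI impI)
        fix s assume s: "t0 + T1 \<le> s"
        have s0: "t0 \<le> s" using s T1 by simp
        have "norm (?b (fst (z s), fst (snd (z s)), snd (snd (z s))) - ?a (snd (snd (z s)))) < \<nu>"
          by (rule UC) (use solO[OF sol s0] Fs[OF s] Ms[OF s] in \<open>auto simp: m_def\<close>)
        then show "norm (?b (z s) - ?a (snd (snd (z s)))) \<le> \<nu>" by simp
      qed
      have Ot: "norm (snd (snd (z t)) - 1) < \<eta>/3"
        using W[OF sol t00 _ pb] T1 t by (auto simp: algebra_simps)
      have tt: "t0 + T1 \<le> t" using t Tn by linarith
      have "norm (z t - (0, mus, 1)) \<le> norm (fst (z t)) + norm (fst (snd (z t)) - mus) + norm (snd (snd (z t)) - 1)"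
        using norm3_le(1)[of "z t - (0,mus,1)"] by simp
      also have "\<dots> < \<eta>/3 + \<eta>/3 + \<eta>/3"
        using Fs[OF tt] Ms[OF tt] Ot by (intro add_strict_mono) (auto simp: m_def)
      finally show "norm (z t - (0, mus, 1)) < \<eta>" by simp
    qed
  qed
  show ?thesis unfolding GAS_def using one stab attr eqm by (auto simp: Theta_bar_def)
qed

end
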